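(* Assume $\mathbf 1\in\Sigma^\circ$. Let $\mathbf x\in(\Sigma^* )^\circ$ be any vector for which $\mathbf 1\in\mathcal P(\mathbf x)^\circ$, and let $r\in(0,1/2]$. Then for every polynomial $\mathbf t\in\mathcal V$, the inclusion $\mathbf x\in\mathcal C(\mathbf t+c\mathbf 1)$ holds for every sufficiently large scalar $c$. Specifically, if $\mathbf x_1$ is the gradient certificate of $\mathbf 1$ and $\mathbf y_c$ is the gradient certificate of $\mathbf t+c\mathbf 1$, then $\mathbf x_1\in\mathcal C(\mathbf t+c\mathbf 1)$ and \[ \|c^{-1}\mathbf x_1-\mathbf y_c\|_{c^{-1}\mathbf x_1}\le r \] hold for every $c>0$ with $c\ge \frac{1+r}{r}\|\mathbf t\|^*_{\mathbf x_1}$.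
   Context: Fix nonzero real polynomials $g_1,\dots,g_m$ in $n$ variables and nonnegative integers $d_1,\dots,d_m$. Let $\mathcal V$ be the real vector space of polynomials $\sum_{i=1}^m g_i r_i$ with $\deg r_i\le 2d_i$, and $\Sigma\subseteq\mathcal V$ the cone of weighted sums of squares $\sum_i g_i\sigma_i$ with each $\sigma_i$ a sum of squares of polynomials of degree at most $d_i$; assume $\Sigma$ is a proper cone. Fix a basis $\mathbf q=(q_1,\dots,q_U)$ of $\mathcal V$, identify $\mathcal V$ and its dual with $\mathbb R^U$ with the standard inner product and Euclidean norm $\|\cdot\|$; $\Sigma^*$ is the dual cone, $K^\circ$ the interior of $K$; $\mathbf 1$ is the coefficient vector of the constant polynomial $1$. For each $i$ fix a basis $\mathbf p_i$ (of size $L_i$) of polynomials of degree at most $d_i$ and let $\Lambda_i:\mathbb R^U\to\mathbb S^{L_i}$ be the unique linear map with $\sum_u q_u\Lambda_i(\mathbf e_u)=g_i\mathbf p_i\mathbf p_i^T$; $\Lambda=\Lambda_1\oplus\cdots\oplus\Lambda_m$ (block diagonal), $\Lambda^*$ its adjoint. Then $(\Sigma^* )^\circ=\{\mathbf x:\Lambda(\mathbf x)\succ0\}$ and $\Sigma^*=\{\mathbf x:\Lambda(\mathbf x)\succeq0\}$. On $(\Sigma^* )^\circ$ let $f(\mathbf x)=-\ln\det\Lambda(\mathbf x)$, with gradient $g(\mathbf x)=-\Lambda^*(\Lambda(\mathbf x)^{-1})$ and Hessian $H(\mathbf x)\mathbf w=\Lambda^*(\Lambda(\mathbf x)^{-1}\Lambda(\mathbf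 w)\Lambda(\mathbf x)^{-1})$, positive definite. Local norm $\|\mathbf v\|_{\mathbf x}=\|H(\mathbf x)^{1/2}\mathbf v\|$, dual local norm $\|\mathbf s\|^*_{\mathbf x}=\|H(\mathbf x)^{-1/2}\mathbf s\|$. For $\mathbf s\in\mathcal V$, $\mathcal C(\mathbf s)=\{\mathbf x\in(\Sigma^* )^\circ:H(\mathbf x)^{-1}\mathbf s\in\Sigma^*\}$ (dual certificates of $\mathbf s$); for $\mathbf x\in(\Sigma^* )^\circ$, $\mathcal P(\mathbf x)=\{\mathbf s\in\Sigma:H(\mathbf x)^{-1}\mathbf s\in\Sigma^*\}$, and $\mathcal P(\mathbf x)^\circ$ its interior. For $\mathbf s\in\Sigma^\circ$, the gradient certificate of $\mathbf s$ is the unique $\mathbf y\in(\Sigma^* )^\circ$ with $-g(\mathbf y)=\mathbf s$. *)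

theory Defs
  imports "HOL-Analysis.Analysis" "HOL-Library.Poly_Mapping"
begin

type_synonym 'v mpoly = "('v \<Rightarrow>\<^sub>0 nat) \<Rightarrow>\<^sub>0 real"

definition mon_deg :: "('v \<Rightarrow>\<^sub>0 nat) \<Rightarrow> nat" where
  "mon_deg m = (\<Sum>v\<in>Poly_Mapping.keys m. Poly_Mapping.lookup m v)"

text \<open>degree at most d (the zero polynomial has degree at most every d)\<close>
definition deg_le :: "nat \<Rightarrow> 'v mpoly \<Rightarrow> bool" where
  "deg_le d p \<longleftrightarrow> (\<forall>m\<in>Poly_Mapping.keys p. mon_deg m \<le> d)"

definition smult_mp :: "real \<Rightarrow> 'v mpoly \<Rightarrow> 'v mpoly" where
  "smult_mp a p = Poly_Mapping.map (\<lambda>c. a * c) p"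

definition const_mp :: "real \<Rightarrow> 'v mpoly" where
  "const_mp a = Poly_Mapping.single 0 a"

definition sos_le :: "nat \<Rightarrow> 'v mpoly \<Rightarrow> bool" where
  "sos_le d s \<longleftrightarrow> (\<exists>hs. (\<forall>h\<in>set hs. deg_le d h) \<and> s = sum_list (map (\<lambda>h. h * h) hs))"

definition Vspace :: "('i::finite \<Rightarrow> 'v mpoly) \<Rightarrow> ('i \<Rightarrow> nat) \<Rightarrow> 'v mpoly set" where
  "Vspace g d = {(\<Sum>i\<in>UNIV. g i * r i) | r. \<forall>i. deg_le (2 * d i) (r i)}"

definition WSOS :: "('i::finite \<Rightarrow> 'v mpoly) \<Rightarrow> ('i \<Rightarrow> nat) \<Rightarrow> 'v mpoly set" where
  "WSOS g d = {(\<Sum>i\<in>UNIV. g i * \<sigma> i) | \<sigma>. \<forall>i. sos_le (d i) (\<sigma> i)}"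

definition is_basis_of :: "('k \<Rightarrow> 'v mpoly) \<Rightarrow> 'k set \<Rightarrow> 'v mpoly set \<Rightarrow> bool" where
  "is_basis_of b K S \<longleftrightarrow> finite K \<and>
     (\<forall>a. (\<Sum>k\<in>K. smult_mp (a k) (b k)) = 0 \<longrightarrow> (\<forall>k\<in>K. a k = 0)) \<and>
     S = {(\<Sum>k\<in>K. smult_mp (a k) (b k)) | a. True}"

definition coordv :: "('u::finite \<Rightarrow> 'v mpoly) \<Rightarrow> 'v mpoly \<Rightarrow> real^'u" where
  "coordv q s = (THE x. (\<Sum>u\<in>UNIV. smult_mp (x $ u) (q u)) = s)"

definition proper_cone :: "('a::euclidean_space) set \<Rightarrow> bool" where
  "proper_cone K \<longleftrightarrow> cone K \<and> convex K \<and> closed K \<and> interior K \<noteq> {} \<and>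
     (\<forall>x. x \<in> K \<and> - x \<in> K \<longrightarrow> x = 0)"

definition dual_cone :: "(real^'u) set \<Rightarrow> (real^'u) set" where
  "dual_cone K = {x. \<forall>s\<in>K. 0 \<le> x \<bullet> s}"

text \<open>The setup: basis q of V indexed by 'u; the union of all bases p_i indexed by 'k,
  where blk k says to which block i the basis polynomial p k belongs.\<close>

definition LamM :: "('u::finite \<Rightarrow> 'v mpoly) \<Rightarrow> ('i \<Rightarrow> 'v mpoly) \<Rightarrow> ('k::finite \<Rightarrow> 'i)
     \<Rightarrow> ('k \<Rightarrow> 'v mpoly) \<Rightarrow> real^'u \<Rightarrow> real^'k^'k" where
  "LamM q g blk p x = (\<chi> k l. if blk k = blk l
      then (\<Sum>u\<in>UNIV. x $ u * coordv q (g (blk k) * p k * p l) $ u) else 0)"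

definition LamAdj :: "('u::finite \<Rightarrow> 'v mpoly) \<Rightarrow> ('i \<Rightarrow> 'v mpoly) \<Rightarrow> ('k::finite \<Rightarrow> 'i)
     \<Rightarrow> ('k \<Rightarrow> 'v mpoly) \<Rightarrow> real^'k^'k \<Rightarrow> real^'u" where
  "LamAdj q g blk p S = (\<chi> u. \<Sum>k\<in>UNIV. \<Sum>l\<in>UNIV. S $ k $ l * LamM q g blk p (axis u 1) $ k $ l)"

text \<open>gradient of f(x) = - ln det Lambda(x)\<close>
definition gradf where
  "gradf q g blk p x = - LamAdj q g blk p (matrix_inv (LamM q g blk p x))"

definition hessf where
  "hessf q g blk p x w = LamAdj q g blk p
     (matrix_inv (LamM q g blk p x) ** LamM q g blk p w ** matrix_inv (LamM q g blk p x))"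

definition hessM where
  "hessM q g blk p x = (\<chi> u v. hessf q g blk p x (axis v 1) $ u)"

definition hess_inv_app where
  "hess_inv_app q g blk p x s = matrix_inv (hessM q g blk p x) *v s"

definition lnorm where
  "lnorm q g blk p x v = sqrt (v \<bullet> (hessM q g blk p x *v v))"

definition dnorm where
  "dnorm q g blk p x s = sqrt (s \<bullet> hess_inv_app q g blk p x s)"

definition SigmaC where
  "SigmaC q g d = coordv q ` WSOS g d"

definition SigmaD where
  "SigmaD q g d = dual_cone (SigmaC q g d)"

definition certs where
  "certs q g d blk p s = {x \<in> interior (SigmaD q g d). hess_inv_app q g blk p x s \<in> SigmaD q g d}"

definition Pset where
  "Pset q g d blk p x = {s \<in> SigmaC q g d. hess_inv_app q g blk p x s \<in> SigmaD q g d}"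

definition grad_cert where
  "grad_cert q g d blk p s = (THE y. y \<in> interior (SigmaD q g d) \<and> - gradf q g blk p y = s)"

end

theory Submission
  imports Defs "HOL-Homology.Invariance_of_Domain"
begin

definition outer :: "real^'k \<Rightarrow> real^'k \<Rightarrow> real^'k^'k" where
  "outer v w = (\<chi> i j. v$i * w$j)"
definition qf :: "real^'k^'k \<Rightarrow> real^'k \<Rightarrow> real" where "qf M a = a \<bullet> (M *v a)"
definition psd :: "real^'k^'k \<Rightarrow> bool" where "psd M \<longleftrightarrow> (\<forall>a. 0 \<le> qf M a)"
definition pd :: "real^'k^'k \<Rightarrow> bool" where "pd M \<longleftrightarrow> (\<forall>a. a \<noteq> 0 \<longrightarrow> 0 < qf M a)"
definition symm :: "real^'k^'k \<Rightarrow> bool" where "symm M \<longleftrightarrow> transpose M = M"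

lemma frob: "(M::real^'k^'k) \<bullet> N = (\<Sum>i\<in>UNIV. \<Sum>j\<in>UNIV. M$i$j * N$i$j)"
  by (simp add: inner_vec_def)

lemma inner_mv: "a \<bullet> ((M::real^'k^'k) *v b) = (\<Sum>i\<in>UNIV. \<Sum>j\<in>UNIV. a$i * M$i$j * b$j)"
  by (simp add: inner_vec_def matrix_vector_mult_def sum_distrib_left mult.assoc)

lemma outer_inner: "M \<bullet> outer v w = v \<bullet> (M *v w)"
  by (simp add: frob inner_mv outer_def mult_ac)

lemma outer_mv: "outer v w *v a = (w \<bullet> a) *\<^sub>R v"
  by (simp add: vec_eq_iff outer_def matrix_vector_mult_def inner_vec_def sum_distrib_left mult_ac)

lemma smv[simp]: "((c::real) *\<^sub>R (M::real^'k^'k)) *v x = c *\<^sub>R (M *v x)"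
  by (simp add: vec_eq_iff matrix_vector_mult_def sum_distrib_left mult.assoc)

lemma qf_outer: "qf (outer v v) a = (v \<bullet> a)^2"
  by (simp add: qf_def outer_mv power2_eq_square inner_commute)

lemma transpose_outer[simp]: "transpose (outer v w) = outer w v"
  by (simp add: vec_eq_iff outer_def transpose_def mult.commute)

lemma inner_transpose: "a \<bullet> ((M::real^'k^'k) *v b) = (transpose M *v a) \<bullet> b"
  by (metis dot_lmul_matrix transpose_matrix_vector)

lemma symm_mv: "symm M \<Longrightarrow> a \<bullet> (M *v b) = b \<bullet> (M *v a)"
  by (metis inner_commute inner_transpose symm_def)

lemma quad_cs:
  fixes A B C :: real
  assumes "\<And>t. 0 \<le> A + 2*t*B + t^2*C" "0 \<le> C"
  shows "B^2 \<le> A*C"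
proof (cases "C = 0")
  case True
  have "B = 0"
  proof (rule ccontr)
    assume "B \<noteq> 0"
    have "0 \<le> A + 2*(-(A+1)/(2*B))*B + (-(A+1)/(2*B))^2*C" by (rule assms(1))
    also have "\<dots> = -1" using \<open>B \<noteq> 0\<close> True by (simp add: field_simps)
    finally show False by simp
  qed
  then show ?thesis using True by simp
next
  case False
  then have Cp: "C > 0" using assms(2) by simp
  have "0 \<le> A + 2*(-B/C)*B + (-B/C)^2*C" by (rule assms(1))
  also have "\<dots> = A - B^2/C" using Cp by (simp add: field_simps power2_eq_square)
  finally have "B^2/C \<le> A" by simp
  then show ?thesis using Cp by (simp add: field_simps)
qed

lemma qf_add: "symm M \<Longrightarrow> qf M (a + t *\<^sub>R b) = qf M a + 2*t*(a \<bullet> (M *v b)) + t^2 * qf M b"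
  unfolding qf_def
  by (simp add: matrix_vector_right_distrib matrix_vector_mult_scaleR inner_add_left inner_add_right
      symm_mv[of M b a] power2_eq_square algebra_simps)

lemma psd_cs:
  assumes "psd M" "symm M"
  shows "(a \<bullet> (M *v b))^2 \<le> qf M a * qf M b"
  by (rule quad_cs) (use assms in \<open>auto simp: psd_def qf_add[symmetric]\<close>)

lemma mv_axis: "((M::real^'k^'k) *v axis j 1) $ i = M$i$j"
  by (simp add: matrix_vector_mult_def axis_def if_distrib cong: if_cong)

lemma qf_axis: "qf (M::real^'k^'k) (axis j 1) = M$j$j"
  by (simp add: qf_def inner_commute[of "axis j 1"] cart_eq_inner_axis[symmetric] mv_axis)

lemma psd_decomp_aux:
  fixes J :: "'k::finite set"
  assumes "finite J"
  shows "\<forall>M::real^'k^'k. psd M \<and> symm M \<and> (\<forall>i l. i \<notin> J \<longrightarrow> M$i$l = 0) \<longrightarrow>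
          (\<exists>(n::nat) v. M = (\<Sum>j<n. outer (v j) (v j)))"
  using assms
proof (induction J rule: finite_induct)
  case empty
  show ?case
  proof (intro allI impI)
    fix M :: "real^'k^'k" assume "psd M \<and> symm M \<and> (\<forall>i l. i \<notin> {} \<longrightarrow> M$i$l = 0)"
    then have "M = 0" by (auto simp: vec_eq_iff)
    then show "\<exists>(n::nat) v. M = (\<Sum>j<n. outer (v j) (v j))"
      by (intro exI[where x="0::nat"]) simp
  qed
next
  case (insert j J)
  show ?case
  proof (intro allI impI)
    fix M :: "real^'k^'k" assume H: "psd M \<and> symm M \<and> (\<forall>i l. i \<notin> insert j J \<longrightarrow> M$i$l = 0)"
    then have psdM: "psd M" and sM: "symm M" and supp: "\<And>i l. i \<notin> insert j J \<Longrightarrow> M$i$l = 0" by auto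
    have sym: "M$i$l = M$l$i" for i l
    proof -
      have "transpose M $ l $ i = M $ l $ i" using sM by (simp add: symm_def)
      then show ?thesis by (simp add: transpose_def)
    qed
    define m where "m = (\<chi> i. M$i$j)"
    define a where "a = M$j$j"
    have mM: "M *v axis j 1 = m" by (simp add: vec_eq_iff m_def mv_axis)
    have a0: "0 \<le> a" using psdM by (metis a_def psd_def qf_axis)
    have cs: "(x \<bullet> m)^2 \<le> qf M x * a" for x
      using psd_cs[OF psdM sM, of x "axis j 1"] by (simp add: mM qf_axis a_def)
    show "\<exists>(n::nat) v. M = (\<Sum>j<n. outer (v j) (v j))"
    proof (cases "a = 0")
      case True
      have "(m \<bullet> m)^2 \<le> 0" using cs[of m] True by simp
      then have "m = 0" by simp
      then have col: "M$i$j = 0" for i using \<open>m = 0\<close> by (simp add: m_def vec_eq_iff)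
      have "\<forall>i l. i \<notin> J \<longrightarrow> M$i$l = 0"
      proof (intro allI impI)
        fix i l assume "i \<notin> J"
        show "M$i$l = 0"
        proof (cases "i = j")
          case True then show ?thesis using col[of l] sym[of i l] by simp
        next
          case False then show ?thesis using supp \<open>i \<notin> J\<close> by auto
        qed
      qed
      then show ?thesis using insert.IH psdM sM by blast
    next
      case False
      then have ap: "a > 0" using a0 by simp
      define M' where "M' = M - (1/a) *\<^sub>R outer m m"
      have "psd M'"
        unfolding psd_def
      proof
        fix x
        have "qf M' x = qf M x - (1/a) * (m \<bullet> x)^2"
          by (simp add: M'_def qf_def matrix_vector_mult_diff_rdistrib outer_mv inner_diff_right
              power2_eq_square inner_commute)
        moreover have "(1/a) * (m \<bullet> x)^2 \<le> qf M x"
          using cs[of x] ap by (simp add: field_simps inner_commute)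
        ultimately show "0 \<le> qf M' x" by simp
      qed
      moreover have "symm M'" using sM by (simp add: M'_def symm_def transpose_def vec_eq_iff outer_def mult.commute)
      moreover have "\<forall>i l. i \<notin> J \<longrightarrow> M'$i$l = 0"
      proof (intro allI impI)
        fix i l assume "i \<notin> J"
        show "M'$i$l = 0"
        proof (cases "i = j")
          case True
          then show ?thesis using ap sym[of j l]
            by (simp add: M'_def outer_def m_def a_def)
        next
          case False
          then have "M$i$l = 0" "m$i = 0" using supp \<open>i \<notin> J\<close> by (auto simp: m_def)
          then show ?thesis by (simp add: M'_def outer_def)
        qed
      qed
      ultimately obtain n :: nat and v where nv: "M' = (\<Sum>j<n. outer (v j) (v j))"
        using insert.IH by blast
      define w where "w = (1/sqrt a) *\<^sub>R m"
      have ww: "outer w w = (1/a) *\<^sub>R outer m m"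
        unfolding w_def outer_def vec_eq_iff using ap by (auto simp: field_simps)
      define v' where "v' = v(n := w)"
      have "(\<Sum>j<Suc n. outer (v' j) (v' j)) = (\<Sum>j<n. outer (v j) (v j)) + outer w w"
        by (simp add: v'_def)
      also have "\<dots> = M" using nv ww by (simp add: M'_def) (metis diff_add_cancel)
      finally have "M = (\<Sum>j<Suc n. outer (v' j) (v' j))" by simp
      then show ?thesis by (intro exI[where x="Suc n"] exI[where x=v'])
    qed
  qed
qed

lemma psd_decomp:
  fixes M :: "real^'k::finite^'k"
  assumes "psd M" "symm M"
  shows "\<exists>(n::nat) v. M = (\<Sum>j<n. outer (v j) (v j))"
  using psd_decomp_aux[of "UNIV :: 'k set"] assms by auto

lemma sum_mmul_left: "(\<Sum>j\<in>S. f j) ** (B::real^'k^'k) = (\<Sum>j\<in>S. f j ** B)"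
  unfolding vec_eq_iff
  apply (simp add: matrix_matrix_mult_def sum_component sum_distrib_right)
  apply (intro allI)
  apply (rule sum.swap)
  done

lemma sum_mmul_right: "(B::real^'k^'k) ** (\<Sum>j\<in>S. f j) = (\<Sum>j\<in>S. B ** f j)"
  unfolding vec_eq_iff
  apply (simp add: matrix_matrix_mult_def sum_component sum_distrib_left)
  apply (intro allI)
  apply (rule sum.swap)
  done

lemma mm_add_r: "((A::real^'k^'k) + B) ** C = A ** C + B ** C"
  by (simp add: matrix_matrix_mult_def vec_eq_iff sum.distrib algebra_simps)
lemma mm_diff_r: "((A::real^'k^'k) - B) ** C = A ** C - B ** C"
  by (simp add: matrix_matrix_mult_def vec_eq_iff sum_subtractf algebra_simps)
lemma mm_diff_l: "(C::real^'k^'k) ** (A - B) = C ** A - C ** B"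
  by (simp add: matrix_matrix_mult_def vec_eq_iff sum_subtractf algebra_simps)
lemma mm_scale_l[simp]: "((k::real) *\<^sub>R (A::real^'k^'k)) ** B = k *\<^sub>R (A ** B)"
  by (rule scalar_matrix_assoc[symmetric])
lemma mm_scale_r[simp]: "(A::real^'k^'k) ** ((k::real) *\<^sub>R B) = k *\<^sub>R (A ** B)"
  by (simp only: matrix_scalar_ac scalar_matrix_assoc)

lemma mmul_outer_r: "(M::real^'k^'k) ** outer v w = outer (M *v v) w"
  by (simp add: vec_eq_iff matrix_matrix_mult_def outer_def matrix_vector_mult_def sum_distrib_right
    sum_distrib_left) (auto intro!: sum.cong simp: mult_ac)

lemma mmul_outer_l: "outer v w ** (M::real^'k^'k) = outer v (transpose M *v w)"
  by (simp add: vec_eq_iff matrix_matrix_mult_def outer_def matrix_vector_mult_def transpose_def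
      sum_distrib_left mult_ac)

lemma outer_scale_l[simp]: "outer ((c::real) *\<^sub>R v) w = c *\<^sub>R outer v w"
  by (simp add: vec_eq_iff outer_def mult_ac)

lemma mmul_outer: "outer v v ** A ** outer w w = (v \<bullet> (A *v w)) *\<^sub>R outer v w"
  by (simp add: mmul_outer_l mmul_outer_r outer_mv inner_transpose[of v A w] inner_commute)

lemma outer_outer_inner: "outer v w \<bullet> A = v \<bullet> (A *v w)"
  by (simp add: inner_commute outer_inner)

lemma sum3_swap: "(\<Sum>i\<in>A. \<Sum>j\<in>B. \<Sum>k\<in>C. f i j k) = (\<Sum>k\<in>C. \<Sum>j\<in>B. \<Sum>i\<in>A. f i j k)"
proof -
  have "(\<Sum>i\<in>A. \<Sum>j\<in>B. \<Sum>k\<in>C. f i j k) = (\<Sum>i\<in>A. \<Sum>k\<in>C. \<Sum>j\<in>B. f i j k)"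
    by (rule sum.cong[OF refl], rule sum.swap)
  also have "\<dots> = (\<Sum>k\<in>C. \<Sum>i\<in>A. \<Sum>j\<in>B. f i j k)" by (rule sum.swap)
  also have "\<dots> = (\<Sum>k\<in>C. \<Sum>j\<in>B. \<Sum>i\<in>A. f i j k)"
    by (rule sum.cong[OF refl], rule sum.swap)
  finally show ?thesis .
qed

lemma frob_mul1: "((P::real^'k^'k) ** (Q::real^'k^'k)) \<bullet> (R::real^'k^'k) = Q \<bullet> (transpose P ** R)"
proof -
  have "((P::real^'k^'k) ** (Q::real^'k^'k)) \<bullet> (R::real^'k^'k) = (\<Sum>i\<in>UNIV. \<Sum>j\<in>UNIV. \<Sum>k\<in>UNIV. P$i$k * Q$k$j * R$i$j)"
    unfolding frob by (simp add: matrix_matrix_mult_def sum_distrib_right)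
  also have "\<dots> = (\<Sum>k\<in>UNIV. \<Sum>j\<in>UNIV. \<Sum>i\<in>UNIV. P$i$k * Q$k$j * R$i$j)"
    by (rule sum3_swap)
  also have "\<dots> = Q \<bullet> (transpose P ** R)"
    unfolding frob by (simp add: matrix_matrix_mult_def transpose_def sum_distrib_left mult_ac)
  finally show ?thesis .
qed

lemma frob_mul2: "((P::real^'k^'k) ** (Q::real^'k^'k)) \<bullet> (R::real^'k^'k) = P \<bullet> (R ** transpose Q)"
proof -
  have "((P::real^'k^'k) ** (Q::real^'k^'k)) \<bullet> (R::real^'k^'k) = (\<Sum>i\<in>UNIV. \<Sum>j\<in>UNIV. \<Sum>k\<in>UNIV. P$i$k * Q$k$j * R$i$j)"
    unfolding frob by (simp add: matrix_matrix_mult_def sum_distrib_right)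
  also have "\<dots> = (\<Sum>i\<in>UNIV. \<Sum>k\<in>UNIV. \<Sum>j\<in>UNIV. P$i$k * Q$k$j * R$i$j)"
    by (rule sum.cong[OF refl], rule sum.swap)
  also have "\<dots> = P \<bullet> (R ** transpose Q)"
    unfolding frob by (simp add: matrix_matrix_mult_def transpose_def sum_distrib_left mult_ac)
  finally show ?thesis .
qed

lemma psd_inner_nonneg:
  assumes "psd X" "symm X" "psd Y"
  shows "0 \<le> X \<bullet> (Y::real^'k::finite^'k)"
proof -
  obtain n :: nat and v where X: "X = (\<Sum>j<n. outer (v j) (v j))" using psd_decomp[OF assms(1,2)] by blast
  have "X \<bullet> Y = (\<Sum>j<n. v j \<bullet> (Y *v v j))"
    by (simp add: X inner_sum_left outer_outer_inner)
  also have "\<dots> \<ge> 0" using assms(3) by (intro sum_nonneg) (simp add: psd_def qf_def)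
  finally show ?thesis .
qed

definition beta :: "real^'k^'k \<Rightarrow> real^'k^'k \<Rightarrow> real^'k^'k \<Rightarrow> real" where
  "beta X A B = (X ** A ** X) \<bullet> B"

lemma beta_nonneg:
  assumes "psd X" "symm X"
  shows "0 \<le> beta X A (A::real^'k::finite^'k)"
proof -
  obtain n :: nat and v where X: "X = (\<Sum>j<n. outer (v j) (v j))" using psd_decomp[OF assms(1,2)] by blast
  have "X ** A ** X = (\<Sum>l<n. \<Sum>j<n. outer (v j) (v j) ** A ** outer (v l) (v l))"
    by (simp add: X sum_mmul_left sum_mmul_right)
  then have "beta X A A = (\<Sum>l<n. \<Sum>j<n. (v j \<bullet> (A *v v l)) * (v j \<bullet> (A *v v l)))"
    by (simp add: beta_def mmul_outer inner_sum_left outer_outer_inner)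
  also have "\<dots> \<ge> 0" by (intro sum_nonneg) simp
  finally show ?thesis .
qed

lemma beta_sym:
  assumes "symm X" "symm A" "symm B"
  shows "beta X A B = beta X B A"
proof -
  have tX: "transpose X = X" and tA: "transpose A = A" and tB: "transpose B = B"
    using assms by (auto simp: symm_def)
  have "beta X A B = ((X ** A) ** X) \<bullet> B" by (simp add: beta_def)
  also have "\<dots> = (X ** A) \<bullet> (B ** X)" by (simp add: frob_mul2 tX)
  also have "\<dots> = A \<bullet> (X ** (B ** X))" by (simp add: frob_mul1 tX)
  also have "\<dots> = beta X B A" by (simp add: beta_def matrix_mul_assoc inner_commute)
  finally show ?thesis .
qed

lemma beta_add:
  "beta X (A + t *\<^sub>R B) (A + t *\<^sub>R B) = beta X A A + t * beta X A B + t * beta X B A + t^2 * beta X B B"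
  by (simp add: beta_def matrix_add_ldistrib mm_add_r
      inner_add_left inner_add_right power2_eq_square algebra_simps)

lemma symm_add: "symm A \<Longrightarrow> symm B \<Longrightarrow> symm (A + t *\<^sub>R B)"
  by (simp add: symm_def transpose_def vec_eq_iff)

lemma beta_cs:
  assumes "psd X" "symm X" "symm A" "symm B"
  shows "(beta X A B)^2 \<le> beta X A A * beta X B B"
proof (rule quad_cs)
  fix t
  have "0 \<le> beta X (A + t *\<^sub>R B) (A + t *\<^sub>R B)" by (rule beta_nonneg[OF assms(1,2)])
  then show "0 \<le> beta X A A + 2 * t * beta X A B + t\<^sup>2 * beta X B B"
    using beta_add[of X A t B] beta_sym[OF assms(2,3,4)] by simp
next
  show "0 \<le> beta X B B" by (rule beta_nonneg[OF assms(1,2)])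
qed

lemma inv_works:
  fixes A :: "real^'k^'k"
  assumes "invertible A"
  shows "A ** matrix_inv A = mat 1" "matrix_inv A ** A = mat 1"
  using someI_ex[OF assms[unfolded invertible_def]] by (auto simp: matrix_inv_def)

lemma inv_unique:
  fixes A B :: "real^'k^'k"
  assumes "B ** A = mat 1"
  shows "matrix_inv A = B"
proof -
  have inv: "invertible A" using assms invertible_left_inverse by blast
  have "matrix_inv A = (B ** A) ** matrix_inv A" by (simp add: assms)
  also have "\<dots> = B ** (A ** matrix_inv A)" by (simp add: matrix_mul_assoc)
  also have "\<dots> = B" using inv_works[OF inv] by simp
  finally show ?thesis .
qed

lemma pd_invertible: "pd (A::real^'k^'k) \<Longrightarrow> invertible A"
  unfolding invertible_left_inverse matrix_left_invertible_ker pd_def qf_def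
  by (metis inner_zero_right less_irrefl)

lemma pd_psd: "pd A \<Longrightarrow> psd A"
  unfolding pd_def psd_def qf_def by (metis inner_zero_left order_le_less)

lemma symm_diff: "symm A \<Longrightarrow> symm B \<Longrightarrow> symm (A - B)"
  by (simp add: symm_def transpose_def vec_eq_iff)
lemma symm_plus: "symm A \<Longrightarrow> symm B \<Longrightarrow> symm (A + B)"
  by (simp add: symm_def transpose_def vec_eq_iff)
lemma symm_scale: "symm A \<Longrightarrow> symm (c *\<^sub>R A)"
  by (simp add: symm_def transpose_def vec_eq_iff)

lemma qf_diff: "qf (A - B) x = qf A x - qf B x"
  by (simp add: qf_def matrix_vector_mult_diff_rdistrib inner_diff_right)
lemma qf_plus: "qf (A + B) x = qf A x + qf B x"
  by (simp add: qf_def matrix_vector_mult_add_rdistrib inner_add_right)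
lemma qf_scale: "qf (c *\<^sub>R A) x = c * qf A x"
  by (simp add: qf_def)

lemma pd_scale: "pd A \<Longrightarrow> 0 < c \<Longrightarrow> pd (c *\<^sub>R A)"
  by (simp add: pd_def qf_scale)

lemma pd_inv:
  fixes P :: "real^'k^'k"
  assumes "pd P" "symm P"
  shows "P ** matrix_inv P = mat 1" "matrix_inv P ** P = mat 1" "symm (matrix_inv P)"
    "pd (matrix_inv P)" "psd (matrix_inv P)"
proof -
  have inv: "invertible P" by (rule pd_invertible[OF assms(1)])
  show PX: "P ** matrix_inv P = mat 1" and XP: "matrix_inv P ** P = mat 1" using inv_works[OF inv] by auto
  have tP: "transpose P = P" using assms(2) by (simp add: symm_def)
  have "transpose (matrix_inv P) ** P = mat 1"
    using PX by (metis matrix_transpose_mul tP transpose_mat)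
  then have "matrix_inv P = transpose (matrix_inv P)" by (rule inv_unique)
  then show sX: "symm (matrix_inv P)" by (simp add: symm_def)
  show pdX: "pd (matrix_inv P)"
    unfolding pd_def
  proof (intro allI impI)
    fix a :: "real^'k" assume "a \<noteq> 0"
    define b where "b = matrix_inv P *v a"
    have Pb: "P *v b = a" by (simp add: b_def matrix_vector_mul_assoc PX)
    then have "b \<noteq> 0" using \<open>a \<noteq> 0\<close> by auto
    then have "0 < qf P b" using assms(1) by (simp add: pd_def)
    also have "qf P b = qf (matrix_inv P) a" by (simp add: qf_def Pb) (simp add: b_def inner_commute)
    finally show "0 < qf (matrix_inv P) a" .
  qed
  then show "psd (matrix_inv P)" by (rule pd_psd)
qed

lemma inv_mv: "pd P \<Longrightarrow> symm P \<Longrightarrow> P *v (matrix_inv P *v a) = a"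
  by (simp add: matrix_vector_mul_assoc pd_inv)
lemma inv_mv2: "pd P \<Longrightarrow> symm P \<Longrightarrow> matrix_inv P *v (P *v a) = a"
  by (simp add: matrix_vector_mul_assoc pd_inv)

lemma inv_scale:
  fixes P :: "real^'k^'k"
  assumes "pd P" "symm P" "c \<noteq> 0"
  shows "matrix_inv (c *\<^sub>R P) = (1/c) *\<^sub>R matrix_inv P"
  by (rule inv_unique) (use assms pd_inv in simp)

lemma symm_transpose: "symm A \<Longrightarrow> transpose A = A" by (simp add: symm_def)

lemma dikin_core:
  fixes P W :: "real^'k::finite^'k"
  assumes "pd P" "symm P" "symm W"
  shows "(a \<bullet> (W *v a))^2 \<le> beta (matrix_inv P) W W * (qf P a)^2"
proof -
  define X where "X = matrix_inv P"
  have sX: "symm X" and pX: "psd X" using pd_inv[OF assms(1,2)] by (auto simp: X_def)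
  have XP: "X *v (P *v a) = a" by (simp add: X_def inv_mv2 assms)
  define B where "B = outer (P *v a) (P *v a)"
  have sB: "symm B" by (simp add: B_def symm_def)
  have "beta X W B = (P *v a) \<bullet> (X *v (W *v (X *v (P *v a))))"
    by (simp add: beta_def B_def outer_inner matrix_vector_mul_assoc matrix_mul_assoc)
  also have "\<dots> = a \<bullet> (W *v a)"
    by (simp add: XP inner_transpose[of "P *v a" X] symm_transpose[OF sX])
  finally have b1: "beta X W B = a \<bullet> (W *v a)" .
  have "X ** B ** X = outer a a"
    by (simp add: B_def mmul_outer_r mmul_outer_l XP symm_transpose[OF sX])
  then have b2: "beta X B B = (qf P a)^2"
    by (simp add: beta_def B_def outer_outer_inner outer_mv qf_def power2_eq_square inner_commute)
  show ?thesis using beta_cs[OF pX sX assms(3) sB] b1 b2 by (simp add: X_def)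
qed

lemma dikin_abs:
  fixes P W :: "real^'k::finite^'k"
  assumes "pd P" "symm P" "symm W"
  shows "\<bar>a \<bullet> (W *v a)\<bar> \<le> sqrt (beta (matrix_inv P) W W) * qf P a"
proof -
  have q0: "0 \<le> qf P a" using pd_psd[OF assms(1)] by (simp add: psd_def)
  have "\<bar>a \<bullet> (W *v a)\<bar> = sqrt ((a \<bullet> (W *v a))^2)" by simp
  also have "\<dots> \<le> sqrt (beta (matrix_inv P) W W * (qf P a)^2)"
    by (rule real_sqrt_le_mono[OF dikin_core[OF assms]])
  also have "\<dots> = sqrt (beta (matrix_inv P) W W) * qf P a"
    using q0 by (simp add: real_sqrt_mult)
  finally show ?thesis .
qed

lemma dikin_pd:
  fixes P W :: "real^'k::finite^'k"
  assumes "pd P" "symm P" "symm W" "beta (matrix_inv P) W W < 1"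
  shows "pd (P + W)"
  unfolding pd_def
proof (intro allI impI)
  fix a :: "real^'k" assume "a \<noteq> 0"
  have q: "0 < qf P a" using assms(1) \<open>a \<noteq> 0\<close> by (simp add: pd_def)
  have s: "sqrt (beta (matrix_inv P) W W) < 1" using assms(4) by simp
  have "sqrt (beta (matrix_inv P) W W) * qf P a < qf P a" using q s by simp
  then have "\<bar>a \<bullet> (W *v a)\<bar> < qf P a" using dikin_abs[OF assms(1-3), of a] by linarith
  then show "0 < qf (P + W) a" by (simp add: qf_plus qf_def[of W])
qed

lemma beta_zero:
  fixes P A :: "real^'k::finite^'k"
  assumes "pd P" "symm P" "symm A" "beta (matrix_inv P) A A = 0"
  shows "A = 0"
proof -
  have z: "a \<bullet> (A *v a) = 0" for a
    using dikin_core[OF assms(1-3), of a] assms(4) by simp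
  have "a \<bullet> (A *v b) = 0" for a b
  proof -
    have "(a + 1 *\<^sub>R b) \<bullet> (A *v (a + 1 *\<^sub>R b)) = 0" by (rule z)
    then show ?thesis using qf_add[OF assms(3), of a 1 b] z[of a] z[of b] by (simp add: qf_def)
  qed
  then have "A *v b = 0" for b by (metis inner_eq_zero_iff)
  then show "A = 0" by (metis mv_axis vec_eq_iff zero_index)
qed

lemma inv_antimono:
  fixes A B :: "real^'k::finite^'k"
  assumes "pd A" "symm A" "pd B" "symm B" "psd (B - A)"
  shows "psd (matrix_inv A - matrix_inv B)"
  unfolding psd_def
proof
  fix x :: "real^'k"
  define y where "y = matrix_inv B *v x"
  define z where "z = matrix_inv A *v x"
  have Az: "A *v z = x" by (simp add: z_def inv_mv assms)
  have By: "B *v y = x" by (simp add: y_def inv_mv assms)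
  have yx: "0 \<le> y \<bullet> x" using assms(3) pd_psd By by (metis psd_def qf_def)
  have zx: "0 \<le> x \<bullet> z" using assms(1) pd_psd Az by (metis psd_def qf_def inner_commute)
  have cs: "(y \<bullet> (A *v z))^2 \<le> qf A y * qf A z" by (rule psd_cs[OF pd_psd[OF assms(1)] assms(2)])
  have "qf A y \<le> qf B y" using assms(5) by (simp add: psd_def qf_diff)
  also have "qf B y = y \<bullet> x" by (simp add: qf_def By)
  finally have Ay: "qf A y \<le> y \<bullet> x" .
  have qz: "qf A z = x \<bullet> z" by (simp add: qf_def Az inner_commute)
  have "(y \<bullet> x)^2 \<le> (y \<bullet> x) * (x \<bullet> z)"
    using cs Ay qz Az zx by (metis mult_right_mono order_trans)
  then have "y \<bullet> x \<le> x \<bullet> z"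
    using yx by (cases "y \<bullet> x = 0") (auto simp: power2_eq_square zx)
  then show "0 \<le> qf (matrix_inv A - matrix_inv B) x"
    by (simp add: qf_def y_def z_def inner_commute matrix_vector_mult_diff_rdistrib inner_diff_right)
qed

lemma beta_as_inner:
  fixes X D :: "real^'k::finite^'k"
  assumes "symm X" "symm D"
  shows "(Y ** D ** X) \<bullet> D = Y \<bullet> (D ** X ** D)"
proof -
  have "(Y ** D ** X) \<bullet> D = (Y ** (D ** X)) \<bullet> D" by (simp add: matrix_mul_assoc)
  also have "\<dots> = Y \<bullet> (D ** transpose (D ** X))" by (rule frob_mul2)
  also have "transpose (D ** X) = X ** D"
    using assms by (simp add: matrix_transpose_mul symm_transpose)
  finally show ?thesis by (simp add: matrix_mul_assoc)
qed

lemma psd_sandwich: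
  fixes X D :: "real^'k::finite^'k"
  assumes "psd X" "symm D"
  shows "psd (D ** X ** D)"
  unfolding psd_def
proof
  fix a
  have "qf (D ** X ** D) a = (D *v a) \<bullet> (X *v (D *v a))"
    by (simp add: qf_def matrix_vector_mul_assoc[symmetric] inner_transpose[of a D] symm_transpose[OF assms(2)])
  then show "0 \<le> qf (D ** X ** D) a" using assms(1) by (simp add: psd_def qf_def)
qed

lemma key_ineq:
  fixes P Q :: "real^'k::finite^'k"
  assumes pP: "pd P" and sP: "symm P" and pQ: "pd Q" and sQ: "symm Q"
  defines "b \<equiv> beta (matrix_inv P) (Q - P) (Q - P)"
  shows "(matrix_inv Q - matrix_inv P) \<bullet> (Q - P) \<le> - b / (1 + sqrt b)"
proof -
  define X where "X = matrix_inv P"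
  define Y where "Y = matrix_inv Q"
  define D where "D = Q - P"
  define \<delta> where "\<delta> = sqrt b"
  have sX: "symm X" and pX: "psd X" and PX: "P ** X = mat 1" and XP: "X ** P = mat 1"
    using pd_inv[OF pP sP] by (auto simp: X_def)
  have sY: "symm Y" and pY: "psd Y" and QY: "Q ** Y = mat 1" and YQ: "Y ** Q = mat 1"
    using pd_inv[OF pQ sQ] by (auto simp: Y_def)
  have sD: "symm D" using sP sQ by (simp add: D_def symm_diff)
  have b0: "0 \<le> b" unfolding b_def using beta_nonneg[OF pX sX] by (simp add: X_def)
  have d0: "0 \<le> \<delta>" using b0 by (simp add: \<delta>_def)
  have "psd ((1 + \<delta>) *\<^sub>R P - Q)"
    unfolding psd_def
  proof
    fix a
    have "\<bar>a \<bullet> (D *v a)\<bar> \<le> \<delta> * qf P a"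
      using dikin_abs[OF pP sP sD, of a] by (simp add: \<delta>_def b_def D_def X_def)
    moreover have "qf Q a = qf P a + a \<bullet> (D *v a)"
      by (simp add: D_def qf_diff qf_def[of "Q - P"] qf_def[of P] qf_def[of Q]
          matrix_vector_mult_diff_rdistrib inner_diff_right)
    moreover have "qf ((1 + \<delta>) *\<^sub>R P - Q) a = (1 + \<delta>) * qf P a - qf Q a"
      by (simp only: qf_diff qf_scale)
    ultimately show "0 \<le> qf ((1 + \<delta>) *\<^sub>R P - Q) a"
      by (simp add: algebra_simps)
  qed
  moreover have "pd ((1 + \<delta>) *\<^sub>R P)" using pd_scale[OF pP] d0 by simp
  moreover have "symm ((1 + \<delta>) *\<^sub>R P)" using sP by (rule symm_scale)
  ultimately have "psd (matrix_inv Q - matrix_inv ((1 + \<delta>) *\<^sub>R P))"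
    using inv_antimono[OF pQ sQ] by blast
  also have "matrix_inv ((1 + \<delta>) *\<^sub>R P) = (1 / (1 + \<delta>)) *\<^sub>R X"
    using inv_scale[OF pP sP, of "1 + \<delta>"] d0 by (simp add: X_def)
  finally have ps: "psd (Y - (1 / (1 + \<delta>)) *\<^sub>R X)" by (simp add: Y_def)
  have sYX: "symm (Y - (1 / (1 + \<delta>)) *\<^sub>R X)" using sY sX by (simp add: symm_diff symm_scale)
  have "0 \<le> (Y - (1 / (1 + \<delta>)) *\<^sub>R X) \<bullet> (D ** X ** D)"
    by (rule psd_inner_nonneg[OF ps sYX psd_sandwich[OF pX sD]])
  then have ineq: "(1 / (1 + \<delta>)) * (X \<bullet> (D ** X ** D)) \<le> Y \<bullet> (D ** X ** D)"
    by (simp add: inner_diff_left)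
  have bX: "X \<bullet> (D ** X ** D) = b"
    using beta_as_inner[OF sX sD, of X] by (simp add: b_def beta_def X_def D_def)
  have "Y ** D ** X = X - Y"
    by (simp add: D_def mm_diff_l mm_diff_r matrix_mul_assoc[symmetric] PX YQ)
  then have "(Y - X) \<bullet> D = - ((Y ** D ** X) \<bullet> D)" by (simp add: inner_diff_left)
  also have "\<dots> = - (Y \<bullet> (D ** X ** D))" by (simp add: beta_as_inner[OF sX sD])
  also have "\<dots> \<le> - ((1 / (1 + \<delta>)) * b)" using ineq bX by simp
  finally show ?thesis by (simp add: X_def Y_def D_def \<delta>_def)
qed

lemma boundary_ineq:
  fixes M N :: "real^'k::finite^'k"
  assumes pM: "pd M" and sM: "symm M" and pN: "pd N" and sN: "symm N" and a0: "a \<noteq> 0"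
  shows "(a \<bullet> a)^2 \<le> (matrix_inv M \<bullet> N) * ((a \<bullet> (matrix_inv N *v a)) * qf M a)"
proof -
  define Mi where "Mi = matrix_inv M"
  define Ni where "Ni = matrix_inv N"
  define t where "t = a \<bullet> (Ni *v a)"
  define s where "s = a \<bullet> (Mi *v a)"
  have sMi: "symm Mi" and pMi: "psd Mi" using pd_inv[OF pM sM] by (auto simp: Mi_def)
  have t0: "0 < t" using pd_inv(4)[OF pN sN] a0 by (simp add: pd_def qf_def t_def Ni_def)
  have q0: "0 \<le> qf M a" using pd_psd[OF pM] by (simp add: psd_def)
  have "psd (N - (1/t) *\<^sub>R outer a a)"
    unfolding psd_def
  proof
    fix x
    have "(x \<bullet> (N *v (Ni *v a)))^2 \<le> qf N x * qf N (Ni *v a)"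
      by (rule psd_cs[OF pd_psd[OF pN] sN])
    then have "(x \<bullet> a)^2 \<le> qf N x * t"
      by (simp add: Ni_def inv_mv pN sN qf_def t_def inner_commute)
    then have "(1/t) * (a \<bullet> x)^2 \<le> qf N x" using t0 by (simp add: field_simps inner_commute)
    then show "0 \<le> qf (N - (1/t) *\<^sub>R outer a a) x"
      by (simp add: qf_diff qf_scale qf_outer)
  qed
  then have "0 \<le> Mi \<bullet> (N - (1/t) *\<^sub>R outer a a)" by (rule psd_inner_nonneg[OF pMi sMi])
  then have st: "s / t \<le> Mi \<bullet> N" by (simp add: inner_diff_right outer_inner s_def)
  have "(a \<bullet> (M *v (Mi *v a)))^2 \<le> qf M a * qf M (Mi *v a)"
    by (rule psd_cs[OF pd_psd[OF pM] sM])
  then have "(a \<bullet> a)^2 \<le> qf M a * s"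
    by (simp add: Mi_def inv_mv pM sM qf_def s_def inner_commute)
  also have "\<dots> \<le> qf M a * (t * (Mi \<bullet> N))"
    using st t0 q0 by (intro mult_left_mono) (auto simp: field_simps)
  finally show ?thesis by (simp add: Mi_def Ni_def t_def mult_ac)
qed

lemma entry_le: "\<bar>(X::real^'k^'k)$i$j\<bar> \<le> norm X"
  by (rule order_trans[OF component_le_norm_cart Finite_Cartesian_Product.norm_nth_le])

lemma mnorm_le: "norm (X::real^'k^'k) \<le> (\<Sum>i\<in>UNIV. \<Sum>j\<in>UNIV. \<bar>X$i$j\<bar>)"
proof -
  have "norm X \<le> (\<Sum>i\<in>UNIV. norm (X$i))" unfolding norm_vec_def by (rule L2_set_le_sum) simp
  also have "\<dots> \<le> (\<Sum>i\<in>UNIV. \<Sum>j\<in>UNIV. \<bar>X$i$j\<bar>)" by (intro sum_mono norm_le_l1_cart)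
  finally show ?thesis .
qed

abbreviation KK :: "'k itself \<Rightarrow> real" where "KK _ \<equiv> real CARD('k) * real CARD('k)"

lemma mv_bound: "norm ((E::real^'k^'k) *v a) \<le> (KK TYPE('k) * norm E) * norm a"
proof -
  have bl: "bounded_linear ((*v) E)" by (simp add: linear_conv_bounded_linear)
  have "norm (E *v a) \<le> onorm ((*v) E) * norm a" by (rule onorm[OF bl])
  also have "onorm ((*v) E) \<le> real CARD('k) * real CARD('k) * norm E"
    by (rule onorm_le_matrix_component) (rule entry_le)
  finally show ?thesis by (simp add: mult_right_mono)
qed

lemma qf_pert: "\<bar>qf N a - qf M a\<bar> \<le> KK TYPE('k) * norm (N - M) * (a \<bullet> (a::real^'k))"
proof -
  have "qf N a - qf M a = a \<bullet> ((N - M) *v a)" by (simp add: qf_def matrix_vector_mult_diff_rdistrib inner_diff_right)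
  then have "\<bar>qf N a - qf M a\<bar> \<le> norm a * norm ((N - M) *v a)" by (simp add: Cauchy_Schwarz_ineq2)
  also have "\<dots> \<le> norm a * ((KK TYPE('k) * norm (N - M)) * norm a)"
    by (intro mult_left_mono mv_bound) simp
  also have "\<dots> = KK TYPE('k) * norm (N - M) * (a \<bullet> a)"
    by (simp add: power2_norm_eq_inner[symmetric] power2_eq_square)
  finally show ?thesis .
qed

lemma pd_unif:
  fixes M :: "real^'k::finite^'k"
  assumes "pd M"
  shows "\<exists>e>0. \<forall>a. e * (a \<bullet> a) \<le> qf M a"
proof -
  let ?S = "sphere (0::real^'k) 1"
  have cS: "compact ?S" by simp
  have neS: "?S \<noteq> {}" by (simp add: sphere_def) (metis norm_axis_1)
  have cont: "continuous_on ?S (qf M)"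
    unfolding qf_def by (intro continuous_intros linear_continuous_on) (simp add: linear_conv_bounded_linear[symmetric])
  obtain a0 where a0: "a0 \<in> ?S" and mn: "\<And>y. y \<in> ?S \<Longrightarrow> qf M a0 \<le> qf M y"
    using continuous_attains_inf[OF cS neS cont] by blast
  have "a0 \<noteq> 0" using a0 by auto
  then have e0: "0 < qf M a0" using assms by (simp add: pd_def)
  show ?thesis
  proof (intro exI[of _ "qf M a0"] conjI allI e0)
    fix a :: "real^'k"
    show "qf M a0 * (a \<bullet> a) \<le> qf M a"
    proof (cases "a = 0")
      case True then show ?thesis by (simp add: qf_def)
    next
      case False
      define u where "u = (1 / norm a) *\<^sub>R a"
      have "u \<in> ?S" using False by (simp add: u_def)
      then have "qf M a0 \<le> qf M u" by (rule mn)
      also have "qf M u = qf M a / (norm a)^2"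
        by (simp add: u_def qf_def power2_eq_square matrix_vector_mult_scaleR)
      finally have "qf M a0 * (norm a)^2 \<le> qf M a" using False by (simp add: field_simps)
      then show ?thesis by (simp add: power2_norm_eq_inner)
    qed
  qed
qed

lemma inv_bound:
  fixes N :: "real^'k::finite^'k"
  assumes "\<forall>a. e * (a \<bullet> a) \<le> qf N a" "0 < e" "invertible N"
  shows "norm (matrix_inv N *v b) \<le> norm b / e"
proof -
  define z where "z = matrix_inv N *v b"
  have Nz: "N *v z = b" by (simp add: z_def matrix_vector_mul_assoc inv_works[OF assms(3)])
  have "e * (z \<bullet> z) \<le> qf N z" using assms(1) by blast
  then have "e * (norm z)^2 \<le> z \<bullet> b" by (simp add: power2_norm_eq_inner qf_def Nz)
  also have "\<dots> \<le> norm z * norm b" by (simp add: Cauchy_Schwarz_ineq2 abs_le_D1)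
  finally have h: "e * (norm z)^2 \<le> norm z * norm b" .
  show ?thesis
  proof (cases "z = 0")
    case True then show ?thesis using assms(2) by (simp add: z_def[symmetric])
  next
    case False
    then have "e * norm z \<le> norm b" using h by (simp add: power2_eq_square)
    then show ?thesis using assms(2) by (simp add: z_def[symmetric] field_simps mult.commute)
  qed
qed

lemma inv_lip:
  fixes M :: "real^'k::finite^'k"
  assumes "pd M"
  shows "\<exists>r>0. \<exists>C. \<forall>N. norm (N - M) < r \<longrightarrow> pd N \<and>
            norm (matrix_inv N - matrix_inv M) \<le> C * norm (N - M)"
proof -
  obtain e where e0: "e > 0" and eM: "\<And>a. e * (a \<bullet> a) \<le> qf M a" using pd_unif[OF assms] by blast
  define K where "K = KK TYPE('k)"
  have K0: "K > 0" by (simp add: K_def)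
  define r where "r = e / (2 * K)"
  have r0: "r > 0" using e0 K0 by (simp add: r_def)
  show ?thesis
  proof (rule exI[of _ r], rule conjI[OF r0], rule exI[of _ "2 * K * K / (e*e)"], intro allI impI)
    fix N :: "real^'k^'k" assume nr: "norm (N - M) < r"
    have Kn: "K * norm (N - M) \<le> e / 2" using nr K0 by (simp add: r_def field_simps)
    have eN: "(e/2) * (a \<bullet> a) \<le> qf N a" for a
    proof -
      have "\<bar>qf N a - qf M a\<bar> \<le> K * norm (N - M) * (a \<bullet> a)" using qf_pert[of N a M] by (simp add: K_def)
      moreover have "K * norm (N - M) * (a \<bullet> a) \<le> (e/2) * (a \<bullet> a)"
        using Kn by (intro mult_right_mono) simp_all
      ultimately show ?thesis using eM[of a] by (simp add: algebra_simps abs_le_iff)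
    qed
    have pdN: "pd N" unfolding pd_def
    proof (intro allI impI)
      fix a :: "real^'k" assume "a \<noteq> 0"
      then have "0 < (e/2) * (a \<bullet> a)" using e0 by simp
      then show "0 < qf N a" using eN[of a] by linarith
    qed
    have iN: "invertible N" and iM: "invertible M" using pd_invertible pdN assms by auto
    define D where "D = matrix_inv N - matrix_inv M"
    have "D = matrix_inv N ** (M - N) ** matrix_inv M"
      by (simp add: D_def mm_diff_l mm_diff_r matrix_mul_assoc[symmetric] inv_works[OF iM])
        (simp add: matrix_mul_assoc inv_works[OF iN])
    then have Dv: "D *v b = matrix_inv N *v ((M - N) *v (matrix_inv M *v b))" for b
      by (simp add: matrix_vector_mul_assoc matrix_mul_assoc)
    have ent: "\<bar>D$i$j\<bar> \<le> 2 * K / (e*e) * norm (N - M)" for i j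
    proof -
      have "\<bar>D$i$j\<bar> \<le> norm (D *v axis j 1)" by (metis component_le_norm_cart mv_axis)
      also have "\<dots> \<le> norm ((M - N) *v (matrix_inv M *v axis j 1)) / (e/2)"
        unfolding Dv by (rule inv_bound) (use eN e0 iN in auto)
      also have "\<dots> \<le> ((K * norm (M - N)) * norm (matrix_inv M *v axis j 1)) / (e/2)"
        using mv_bound[of "M - N"] e0 by (intro divide_right_mono) (simp_all add: K_def)
      also have "norm (matrix_inv M *v axis j 1) \<le> norm (axis j 1 :: real^'k) / e"
        by (rule inv_bound) (use eM e0 iM in auto)
      also have "norm (axis j 1 :: real^'k) = 1" by simp
      finally have "\<bar>D$i$j\<bar> \<le> K * norm (M - N) * (1 / e) / (e / 2)"
        using K0 e0 by (simp add: divide_right_mono mult_left_mono)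
      also have "\<dots> = 2 * K / (e*e) * norm (N - M)" by (simp add: norm_minus_commute field_simps)
      finally show ?thesis .
    qed
    have "norm D \<le> (\<Sum>i\<in>UNIV. \<Sum>j\<in>UNIV. \<bar>D$i$j\<bar>)" by (rule mnorm_le)
    also have "\<dots> \<le> (\<Sum>i\<in>(UNIV::'k set). \<Sum>j\<in>(UNIV::'k set). 2 * K / (e*e) * norm (N - M))"
      by (intro sum_mono ent)
    also have "\<dots> = 2 * K * K / (e * e) * norm (N - M)" by (simp add: K_def)
    finally have "norm (matrix_inv N - matrix_inv M) \<le> 2 * K * K / (e * e) * norm (N - M)"
      unfolding D_def .
    then show "pd N \<and> norm (matrix_inv N - matrix_inv M) \<le> 2 * K * K / (e * e) * norm (N - M)"
      using pdN by blast
  qed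
qed

lemma pd_open: "open {M::real^'k::finite^'k. pd M}"
  unfolding open_contains_ball
proof
  fix M :: "real^'k^'k" assume "M \<in> {M. pd M}"
  then obtain r where r0: "r > 0" and h: "\<And>N. norm (N - M) < r \<Longrightarrow> pd N" using inv_lip[of M] by auto
  show "\<exists>e>0. ball M e \<subseteq> {M. pd M}"
    using r0 h by (intro exI[of _ r]) (auto simp: dist_norm norm_minus_commute)
qed

lemma sm: "smult_mp a p = Poly_Mapping.single 0 a * p"
proof -
  have "(\<lambda>c. a * c) = (*) a" by (rule ext) simp
  then show ?thesis by (simp add: smult_mp_def mult_map_scale_conv_mult)
qed

lemma single0_mult: "Poly_Mapping.single 0 (a::real) * Poly_Mapping.single 0 b = Poly_Mapping.single 0 (a*b)"
  by (simp add: mult_single)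

lemma sm_add_l: "smult_mp (a + b) p = smult_mp a p + smult_mp b p"
  by (simp add: sm single_add distrib_right)
lemma sm_diff_l: "smult_mp (a - b) p = smult_mp a p - smult_mp b p"
  by (simp add: sm single_diff left_diff_distrib)
lemma sm_add_r: "smult_mp a (p + q) = smult_mp a p + smult_mp a q"
  by (simp add: sm distrib_left)
lemma sm_zero_l[simp]: "smult_mp 0 p = 0" by (simp add: sm)
lemma sm_one[simp]: "smult_mp 1 p = p" by (simp add: sm)
lemma sm_zero_r[simp]: "smult_mp a 0 = 0" by (simp add: sm)
lemma sm_sm: "smult_mp a (smult_mp b p) = smult_mp (a*b) p"
  by (simp add: sm mult.assoc[symmetric] single0_mult)
lemma sm_mult_l: "smult_mp a p * q = smult_mp a (p * q)"
  by (simp add: sm mult.assoc)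
lemma sm_mult_r: "p * smult_mp a q = smult_mp a (p * (q::'v mpoly))"
  by (simp add: sm mult_ac)
lemma sm_sum_r: "smult_mp a (sum f A) = (\<Sum>x\<in>A. smult_mp a (f x))"
  by (simp add: sm sum_distrib_left)
lemma sm_sum_l: "smult_mp (sum f A) p = (\<Sum>x\<in>A. smult_mp (f x) p)"
  by (induction A rule: infinite_finite_induct) (simp_all add: sm_add_l)

lemma mon_deg_univ: "mon_deg (m::'v::finite \<Rightarrow>\<^sub>0 nat) = (\<Sum>v\<in>UNIV. Poly_Mapping.lookup m v)"
  unfolding mon_deg_def
  by (rule sum.mono_neutral_left) (auto simp: in_keys_iff)

lemma mon_deg_add: "mon_deg ((a::'v::finite \<Rightarrow>\<^sub>0 nat) + b) = mon_deg a + mon_deg b"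
  by (simp add: mon_deg_univ lookup_add sum.distrib)

lemma deg_le_mult:
  fixes f h :: "'v::finite mpoly"
  assumes "deg_le a f" "deg_le b h"
  shows "deg_le (a + b) (f * h)"
  unfolding deg_le_def
proof
  fix m assume "m \<in> Poly_Mapping.keys (f * h)"
  then obtain x y where "m = x + y" "x \<in> Poly_Mapping.keys f" "y \<in> Poly_Mapping.keys h"
    using keys_mult by blast
  then show "mon_deg m \<le> a + b" using assms by (auto simp: deg_le_def mon_deg_add add_mono)
qed

lemma deg_le_zero[simp]: "deg_le d 0" by (simp add: deg_le_def)

lemma sum_basis_delta:
  assumes "finite K" "k \<in> K"
  shows "(\<Sum>k'\<in>K. smult_mp (if k' = k then 1 else 0) (b k')) = b k"
proof -
  have "(\<Sum>k'\<in>K. smult_mp (if k' = k then 1 else 0) (b k')) = (\<Sum>k'\<in>K. if k' = k then b k else 0)"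
    by (rule sum.cong) auto
  also have "\<dots> = b k" using assms by simp
  finally show ?thesis .
qed

lemma pm_repr: "(f::('a \<Rightarrow>\<^sub>0 'b::comm_monoid_add)) = (\<Sum>a\<in>Poly_Mapping.keys f. Poly_Mapping.single a (Poly_Mapping.lookup f a))"
proof (rule poly_mapping_eqI)
  fix k
  have "Poly_Mapping.lookup (\<Sum>a\<in>Poly_Mapping.keys f. Poly_Mapping.single a (Poly_Mapping.lookup f a)) k
      = (\<Sum>a\<in>Poly_Mapping.keys f. if a = k then Poly_Mapping.lookup f a else 0)"
    by (simp add: lookup_sum lookup_single when_def)
  also have "\<dots> = Poly_Mapping.lookup f k" by (simp add: in_keys_iff)
  finally show "Poly_Mapping.lookup f k = Poly_Mapping.lookup (\<Sum>a\<in>Poly_Mapping.keys f. Poly_Mapping.single a (Poly_Mapping.lookup f a)) k" by simp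
qed

lemma mpoly_no_zero_div:
  fixes f h :: "'v::finite mpoly"
  assumes "f \<noteq> 0" "h \<noteq> 0"
  shows "f * h \<noteq> 0"
proof -
  obtain \<iota> :: "'v \<Rightarrow> nat" and n where "\<iota> ` UNIV = {i. i < n}" and inj: "inj \<iota>"
    using finite_imp_inj_to_nat_seg[of "UNIV :: 'v set"] by auto
  define R :: "('v \<Rightarrow>\<^sub>0 nat) \<Rightarrow> (nat \<Rightarrow>\<^sub>0 nat)" where
    "R m = Abs_poly_mapping (\<lambda>i. Poly_Mapping.lookup m (inv_into UNIV \<iota> i) when i \<in> range \<iota>)" for m
  have fin: "finite {i. (Poly_Mapping.lookup m (inv_into UNIV \<iota> i) when i \<in> range \<iota>) \<noteq> 0}" for m :: "'v \<Rightarrow>\<^sub>0 nat"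
    by (rule finite_subset[of _ "range \<iota>"]) (auto simp: when_def)
  have lR: "Poly_Mapping.lookup (R m) i = (Poly_Mapping.lookup m (inv_into UNIV \<iota> i) when i \<in> range \<iota>)" for m i
    unfolding R_def by (subst lookup_Abs_poly_mapping[OF fin]) simp
  have Radd: "R (a + b) = R a + R b" for a b
    by (rule poly_mapping_eqI) (simp add: lR lookup_add when_def)
  have Rinj: "R a = R b \<Longrightarrow> a = b" for a b
  proof (rule poly_mapping_eqI)
    fix v assume "R a = R b"
    then have "Poly_Mapping.lookup (R a) (\<iota> v) = Poly_Mapping.lookup (R b) (\<iota> v)" by simp
    then show "Poly_Mapping.lookup a v = Poly_Mapping.lookup b v" by (simp add: lR inj)
  qed
  define F where "F = Poly_Mapping.keys f"
  define G where "G = Poly_Mapping.keys h"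
  have fF: "finite F" "F \<noteq> {}" using assms(1) by (auto simp: F_def)
  have fG: "finite G" "G \<noteq> {}" using assms(2) by (auto simp: G_def)
  have "Max (R ` F) \<in> R ` F" using fF by (intro Max_in) auto
  then obtain A where A: "A \<in> F" "R A = Max (R ` F)" by (metis imageE)
  have "Max (R ` G) \<in> R ` G" using fG by (intro Max_in) auto
  then obtain B where B: "B \<in> G" "R B = Max (R ` G)" by (metis imageE)
  have Amax: "a \<in> F \<Longrightarrow> R a \<le> R A" for a using A fF by simp
  have Bmax: "b \<in> G \<Longrightarrow> R b \<le> R B" for b using B fG by simp
  have uniq: "a \<in> F \<Longrightarrow> b \<in> G \<Longrightarrow> a + b = A + B \<longleftrightarrow> a = A \<and> b = B" for a b
  proof
    assume ab: "a \<in> F" "b \<in> G" "a + b = A + B"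
    have "R a = R A"
    proof (rule ccontr)
      assume "R a \<noteq> R A"
      then have "R a < R A" using Amax[OF ab(1)] by simp
      then have "R a + R b < R A + R B" using Bmax[OF ab(2)] by (rule add_less_le_mono)
      then show False using ab(3) by (metis Radd less_irrefl)
    qed
    then have "a = A" by (rule Rinj)
    then show "a = A \<and> b = B" using ab(3) by simp
  qed simp
  have fh: "f * h = (\<Sum>a\<in>F. \<Sum>b\<in>G. Poly_Mapping.single (a + b) (Poly_Mapping.lookup f a * Poly_Mapping.lookup h b))"
  proof -
    have "f * h = (\<Sum>a\<in>F. Poly_Mapping.single a (Poly_Mapping.lookup f a)) * (\<Sum>b\<in>G. Poly_Mapping.single b (Poly_Mapping.lookup h b))"
      unfolding F_def G_def using pm_repr[of f] pm_repr[of h] by simp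
    also have "\<dots> = (\<Sum>a\<in>F. \<Sum>b\<in>G. Poly_Mapping.single a (Poly_Mapping.lookup f a) * Poly_Mapping.single b (Poly_Mapping.lookup h b))"
      by (simp add: sum_product)
    finally show ?thesis by (simp add: mult_single)
  qed
  have "Poly_Mapping.lookup (f * h) (A + B) = (\<Sum>a\<in>F. \<Sum>b\<in>G. if a = A \<and> b = B then Poly_Mapping.lookup f a * Poly_Mapping.lookup h b else 0)"
    unfolding fh lookup_sum lookup_single
    by (intro sum.cong refl) (auto simp: when_def uniq)
  also have "\<dots> = (\<Sum>a\<in>F. if a = A then Poly_Mapping.lookup f a * Poly_Mapping.lookup h B else 0)"
    by (intro sum.cong refl) (use fG B in \<open>auto simp: if_distrib cong: if_cong\<close>)
  also have "\<dots> = Poly_Mapping.lookup f A * Poly_Mapping.lookup h B" using fF A by simp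
  also have "\<dots> \<noteq> 0" using A(1) B(1) by (simp add: F_def G_def in_keys_iff)
  finally show ?thesis by auto
qed

locale wsos =
  fixes g :: "'i::finite \<Rightarrow> 'v::finite mpoly" and d :: "'i \<Rightarrow> nat"
    and q :: "'u::finite \<Rightarrow> 'v mpoly"
    and blk :: "'k::finite \<Rightarrow> 'i" and p :: "'k \<Rightarrow> 'v mpoly"
  assumes g_nz: "\<forall>i. g i \<noteq> 0"
    and q_basis: "is_basis_of q UNIV (Vspace g d)"
    and p_basis: "\<forall>i. is_basis_of p {k. blk k = i} {h. deg_le (d i) h}"
    and proper: "proper_cone (SigmaC q g d)"
begin

definition rep :: "real^'u \<Rightarrow> 'v mpoly" where "rep x = (\<Sum>u\<in>UNIV. smult_mp (x$u) (q u))"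

lemma V_rep: "Vspace g d = range rep"
proof -
  have "Vspace g d = {(\<Sum>k\<in>UNIV. smult_mp (a k) (q k)) | a. True}"
    using q_basis by (simp add: is_basis_of_def)
  also have "\<dots> = range rep"
  proof (auto simp: rep_def)
    fix a :: "'u \<Rightarrow> real"
    show "(\<Sum>k\<in>UNIV. smult_mp (a k) (q k)) \<in> range (\<lambda>x::real^'u. \<Sum>u\<in>UNIV. smult_mp (x$u) (q u))"
      by (rule image_eqI[of _ _ "\<chi> u. a u"]) auto
  qed
  finally show ?thesis .
qed

lemma rep_diff: "rep x - rep y = rep (x - y)"
  by (simp add: rep_def sm_diff_l sum_subtractf)
lemma rep_add: "rep (x + y) = rep x + rep y"
  by (simp add: rep_def sm_add_l sum.distrib)
lemma rep_scale: "rep (c *\<^sub>R x) = smult_mp c (rep x)"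
  by (simp add: rep_def sm_sum_r sm_sm)
lemma rep_zero[simp]: "rep 0 = 0"
  by (simp add: rep_def)

lemma rep_inj: "rep x = rep y \<Longrightarrow> x = y"
proof -
  assume "rep x = rep y"
  then have "(\<Sum>u\<in>UNIV. smult_mp ((x - y)$u) (q u)) = 0" using rep_diff[of x y] by (simp add: rep_def)
  then have "\<forall>u\<in>UNIV. (x - y)$u = 0" using q_basis unfolding is_basis_of_def by blast
  then show "x = y" by (simp add: vec_eq_iff)
qed

lemma coord_rep[simp]: "coordv q (rep x) = x"
  unfolding coordv_def by (rule the_equality) (auto simp: rep_def[symmetric] intro: rep_inj)

lemma rep_coord: "s \<in> Vspace g d \<Longrightarrow> rep (coordv q s) = s"
  by (auto simp: V_rep)

lemma V_add: "s \<in> Vspace g d \<Longrightarrow> t \<in> Vspace g d \<Longrightarrow> s + t \<in> Vspace g d"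
  by (auto simp: V_rep rep_add[symmetric])
lemma V_sm: "s \<in> Vspace g d \<Longrightarrow> smult_mp c s \<in> Vspace g d"
  by (auto simp: V_rep rep_scale[symmetric])
lemma V_zero: "0 \<in> Vspace g d"
  by (simp add: V_rep) (metis rangeI rep_zero)

lemma coord_add: "s \<in> Vspace g d \<Longrightarrow> t \<in> Vspace g d \<Longrightarrow> coordv q (s + t) = coordv q s + coordv q t"
  by (auto simp: V_rep rep_add[symmetric])
lemma coord_sm: "s \<in> Vspace g d \<Longrightarrow> coordv q (smult_mp c s) = c *\<^sub>R coordv q s"
  by (auto simp: V_rep rep_scale[symmetric])
lemma coord_zero[simp]: "coordv q 0 = 0"
  using coord_rep[of 0] by simp

lemma V_sum: "(\<And>j. j \<in> A \<Longrightarrow> f j \<in> Vspace g d) \<Longrightarrow> sum f A \<in> Vspace g d"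
  by (induction A rule: infinite_finite_induct) (auto simp: V_zero V_add)

lemma coord_sum: "(\<And>j. j \<in> A \<Longrightarrow> f j \<in> Vspace g d) \<Longrightarrow> coordv q (sum f A) = (\<Sum>j\<in>A. coordv q (f j))"
proof (induction A rule: infinite_finite_induct)
  case (insert x F)
  then show ?case by (simp add: coord_add V_sum)
qed auto

lemma coord_inj: "s \<in> Vspace g d \<Longrightarrow> coordv q s = 0 \<Longrightarrow> s = 0"
  using rep_coord by fastforce

lemma gV: "deg_le (2 * d i) r \<Longrightarrow> g i * r \<in> Vspace g d"
proof -
  assume r: "deg_le (2 * d i) r"
  define rr where "rr = (\<lambda>j. if j = i then r else 0)"
  have "(\<Sum>j\<in>UNIV. g j * rr j) = (\<Sum>j\<in>UNIV. if j = i then g i * r else 0)"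
    by (rule sum.cong) (auto simp: rr_def)
  also have "\<dots> = g i * r" by simp
  finally have "g i * r = (\<Sum>j\<in>UNIV. g j * rr j)" by simp
  moreover have "\<forall>j. deg_le (2 * d j) (rr j)" using r by (simp add: rr_def)
  ultimately show ?thesis unfolding Vspace_def by blast
qed

definition Blk :: "'i \<Rightarrow> 'k set" where "Blk i = {k. blk k = i}"

lemma finB[simp]: "finite (Blk i)" by simp

lemma hbasis: "{h. deg_le (d i) h} = {(\<Sum>k\<in>Blk i. smult_mp (a k) (p k)) | a. True}"
  using p_basis unfolding is_basis_of_def Blk_def by blast

lemma hindep: "(\<Sum>k\<in>Blk i. smult_mp (a k) (p k)) = 0 \<Longrightarrow> k \<in> Blk i \<Longrightarrow> a k = 0"
  using p_basis unfolding is_basis_of_def Blk_def by blast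

lemma p_deg: "deg_le (d (blk k)) (p k)"
proof -
  have "k \<in> Blk (blk k)" by (simp add: Blk_def)
  then have "(\<Sum>k'\<in>Blk (blk k). smult_mp (if k' = k then 1 else 0) (p k')) = p k"
    by (intro sum_basis_delta) auto
  then have "p k \<in> {h. deg_le (d (blk k)) h}" unfolding hbasis
    by (intro CollectI exI[of _ "\<lambda>k'. if k' = k then 1 else 0"]) simp
  then show ?thesis by simp
qed

lemma gpp_V: "blk k = i \<Longrightarrow> blk l = i \<Longrightarrow> g i * p k * p l \<in> Vspace g d"
  using deg_le_mult[OF p_deg[of k] p_deg[of l]] gV[of i "p k * p l"] by (simp add: mult.assoc mult_2)

lemma ghh_V: "deg_le (d i) h \<Longrightarrow> g i * (h * h) \<in> Vspace g d"
  using deg_le_mult[of "d i" h "d i" h] gV[of i "h * h"] by (simp add: mult_2)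

definition hp :: "'i \<Rightarrow> real^'k \<Rightarrow> 'v mpoly" where "hp i a = (\<Sum>k\<in>Blk i. smult_mp (a$k) (p k))"
definition ab :: "'i \<Rightarrow> real^'k \<Rightarrow> real^'k" where "ab i a = (\<chi> k. if blk k = i then a$k else 0)"

lemma hp_deg: "deg_le (d i) (hp i a)"
proof -
  have "hp i a \<in> {h. deg_le (d i) h}" unfolding hbasis hp_def by blast
  then show ?thesis by simp
qed

lemma deg_hp: "deg_le (d i) h \<Longrightarrow> \<exists>a. h = hp i a"
proof -
  assume "deg_le (d i) h"
  then have "h \<in> {h. deg_le (d i) h}" by simp
  then obtain c where "h = (\<Sum>k\<in>Blk i. smult_mp (c k) (p k))" unfolding hbasis by blast
  then have "h = hp i (\<chi> k. c k)" by (simp add: hp_def)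
  then show ?thesis by blast
qed

lemma sm_prod: "gg * (smult_mp a x * smult_mp b y) = smult_mp (a*b) (gg * x * (y::'v mpoly))"
  by (simp add: sm_mult_l sm_mult_r sm_sm mult.assoc mult.commute[of b a])

lemma hp_expand: "g i * (hp i a * hp i a) = (\<Sum>k\<in>Blk i. \<Sum>l\<in>Blk i. smult_mp (a$k * a$l) (g i * p k * p l))"
proof -
  have "hp i a * hp i a = (\<Sum>k\<in>Blk i. \<Sum>l\<in>Blk i. smult_mp (a$k) (p k) * smult_mp (a$l) (p l))"
    by (simp only: hp_def sum_product)
  then have "g i * (hp i a * hp i a) = (\<Sum>k\<in>Blk i. \<Sum>l\<in>Blk i. g i * (smult_mp (a$k) (p k) * smult_mp (a$l) (p l)))"
    by (simp only: sum_distrib_left)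
  then show ?thesis by (simp only: sm_prod)
qed

abbreviation L where "L \<equiv> LamM q g blk p"
abbreviation Ls where "Ls \<equiv> LamAdj q g blk p"

lemma L_entry_in: "blk k = i \<Longrightarrow> blk l = i \<Longrightarrow> L x $ k $ l = x \<bullet> coordv q (g i * p k * p l)"
  by (simp add: LamM_def inner_vec_def)

lemma L_entry_out: "blk k \<noteq> blk l \<Longrightarrow> L x $ k $ l = 0"
  by (simp add: LamM_def)

lemma gram1: "x \<bullet> coordv q (g i * (hp i a * hp i a)) = ab i a \<bullet> (L x *v ab i a)"
proof -
  have mem: "k \<in> Blk i \<Longrightarrow> l \<in> Blk i \<Longrightarrow> smult_mp c (g i * p k * p l) \<in> Vspace g d" for k l c
    by (intro V_sm gpp_V) (auto simp: Blk_def)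
  have "coordv q (g i * (hp i a * hp i a)) = (\<Sum>k\<in>Blk i. \<Sum>l\<in>Blk i. (a$k * a$l) *\<^sub>R coordv q (g i * p k * p l))"
    unfolding hp_expand
    by (subst coord_sum, intro V_sum mem, assumption+)
       (intro sum.cong refl, subst coord_sum, rule mem, assumption+,
        intro sum.cong refl coord_sm gpp_V, auto simp: Blk_def)
  then have lhs: "x \<bullet> coordv q (g i * (hp i a * hp i a)) = (\<Sum>k\<in>Blk i. \<Sum>l\<in>Blk i. a$k * a$l * (x \<bullet> coordv q (g i * p k * p l)))"
    by (simp add: inner_sum_right)
  have "ab i a \<bullet> (L x *v ab i a) = (\<Sum>k\<in>UNIV. \<Sum>l\<in>UNIV. (ab i a)$k * L x $ k $ l * (ab i a)$l)"
    by (rule inner_mv)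
  also have "\<dots> = (\<Sum>k\<in>UNIV. if blk k = i then (\<Sum>l\<in>UNIV. if blk l = i then a$k * a$l * (x \<bullet> coordv q (g i * p k * p l)) else 0) else 0)"
    by (intro sum.cong refl) (auto simp: ab_def L_entry_in mult_ac intro!: sum.cong)
  also have "\<dots> = (\<Sum>k\<in>Blk i. \<Sum>l\<in>Blk i. a$k * a$l * (x \<bullet> coordv q (g i * p k * p l)))"
    by (simp add: sum.If_cases Blk_def)
  finally show ?thesis using lhs by simp
qed

end

lemma inner_ext: "(\<And>w. a \<bullet> w = b \<bullet> (w::'a::real_inner)) \<Longrightarrow> a = b"
  by (metis inner_diff_left inner_eq_zero_iff right_minus_eq)

lemma sum_axis: "(\<Sum>u'\<in>UNIV. (axis u (1::real)) $ u' * f u') = f u"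
proof -
  have "(\<Sum>u'\<in>UNIV. (axis u (1::real)) $ u' * f u') = (\<Sum>u'\<in>UNIV. if u' = u then f u' else 0)"
    by (rule sum.cong) (auto simp: axis_def)
  then show ?thesis by simp
qed

context wsos begin

lemma L_symm: "symm (L x)"
  unfolding symm_def transpose_def vec_eq_iff
  by (auto simp: LamM_def mult_ac)

lemma L_axis: "L (axis u 1) $ k $ l = (if blk k = blk l then coordv q (g (blk k) * p k * p l) $ u else 0)"
  by (simp add: LamM_def sum_axis)

lemma L_entry: "L x $ k $ l = (\<Sum>u\<in>UNIV. x$u * L (axis u 1) $ k $ l)"
  by (simp add: L_axis) (simp add: LamM_def)

lemma L_add: "L (x + y) = L x + L y"
  by (simp add: vec_eq_iff L_entry[of "x+y"] L_entry[of x] L_entry[of y] sum.distrib algebra_simps)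

lemma L_scale: "L (c *\<^sub>R x) = c *\<^sub>R L x"
  by (simp add: vec_eq_iff L_entry[of "c *\<^sub>R x"] L_entry[of x] sum_distrib_left mult.assoc)

lemma L_diff: "L (x - y) = L x - L y"
  using L_add[of "x - y" y] by simp

lemma L_linear: "linear L"
  by (rule linearI) (simp_all add: L_add L_scale)

lemma Ls_adj: "Ls M \<bullet> w = M \<bullet> L w"
proof -
  have "Ls M \<bullet> w = (\<Sum>u\<in>UNIV. \<Sum>k\<in>UNIV. \<Sum>l\<in>UNIV. M$k$l * L (axis u 1) $ k $ l * w$u)"
    by (simp add: LamAdj_def inner_vec_def sum_distrib_right)
  also have "\<dots> = (\<Sum>l\<in>UNIV. \<Sum>k\<in>UNIV. \<Sum>u\<in>UNIV. M$k$l * L (axis u 1) $ k $ l * w$u)"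
    by (rule sum3_swap)
  also have "\<dots> = M \<bullet> L w"
    by (simp add: frob L_entry[of w] sum_distrib_left mult_ac) (rule sum.swap)
  finally show ?thesis .
qed

lemma Ls_add: "Ls (A + B) = Ls A + Ls B"
  by (rule inner_ext) (simp add: Ls_adj inner_add_left)
lemma Ls_scale: "Ls (c *\<^sub>R A) = c *\<^sub>R Ls A"
  by (rule inner_ext) (simp add: Ls_adj)
lemma Ls_diff: "Ls (A - B) = Ls A - Ls B"
  by (rule inner_ext) (simp add: Ls_adj inner_diff_left)
lemma Ls_zero: "Ls 0 = 0"
  by (rule inner_ext) (simp add: Ls_adj)
lemma Ls_sum: "Ls (sum f A) = (\<Sum>j\<in>A. Ls (f j))"
  by (rule inner_ext) (simp add: Ls_adj inner_sum_left)
lemma Ls_linear: "linear Ls"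
  by (rule linearI) (simp_all add: Ls_add Ls_scale)

lemma Ls_transpose: "Ls (transpose M) = Ls M"
proof (rule inner_ext)
  fix w
  have "transpose M \<bullet> L w = M \<bullet> transpose (L w)"
    by (simp add: frob transpose_def) (rule sum.swap)
  then show "Ls (transpose M) \<bullet> w = Ls M \<bullet> w" using L_symm[of w] by (simp add: Ls_adj symm_def)
qed

lemma ab_mv: "L x *v ab i a = ab i (L x *v a)"
proof -
  have "(L x *v ab i a) $ k = ab i (L x *v a) $ k" for k
  proof (cases "blk k = i")
    case True
    have "(\<Sum>l\<in>UNIV. L x $ k $ l * (if blk l = i then a$l else 0)) = (\<Sum>l\<in>UNIV. L x $ k $ l * a$l)"
      by (intro sum.cong refl) (use True L_entry_out in auto)
    then show ?thesis using True by (simp add: matrix_vector_mult_def ab_def)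
  next
    case False
    have "(\<Sum>l\<in>UNIV. L x $ k $ l * (if blk l = i then a$l else 0)) = 0"
      by (intro sum.neutral) (use False L_entry_out in auto)
    then show ?thesis using False by (simp add: matrix_vector_mult_def ab_def)
  qed
  then show ?thesis by (simp add: vec_eq_iff)
qed

lemma ab_sum: "a = (\<Sum>i\<in>UNIV. ab i a)"
  by (simp add: vec_eq_iff ab_def sum_component)

lemma ab_inner: "ab i a \<bullet> b = ab i a \<bullet> ab i b"
  by (simp add: inner_vec_def ab_def) (intro sum.cong refl, auto)

lemma qf_blocks: "a \<bullet> (L x *v a) = (\<Sum>i\<in>UNIV. ab i a \<bullet> (L x *v ab i a))"
proof -
  have "a \<bullet> (L x *v a) = (\<Sum>i\<in>UNIV. ab i a) \<bullet> (L x *v a)"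
    by (rule arg_cong[where f="\<lambda>z. z \<bullet> (L x *v a)"], rule ab_sum)
  also have "\<dots> = (\<Sum>i\<in>UNIV. ab i a \<bullet> (L x *v a))" by (simp add: inner_sum_left)
  also have "\<dots> = (\<Sum>i\<in>UNIV. ab i a \<bullet> (L x *v ab i a))"
    by (intro sum.cong refl) (subst ab_inner, simp add: ab_mv)
  finally show ?thesis .
qed

lemma wsos_single: "deg_le (d i) h \<Longrightarrow> g i * (h * h) \<in> WSOS g d"
proof -
  assume h: "deg_le (d i) h"
  define \<sigma> where "\<sigma> = (\<lambda>j. if j = i then h * h else 0)"
  have "(\<Sum>j\<in>UNIV. g j * \<sigma> j) = (\<Sum>j\<in>UNIV. if j = i then g i * (h * h) else 0)"
    by (rule sum.cong) (auto simp: \<sigma>_def)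
  also have "\<dots> = g i * (h * h)" by simp
  finally have "g i * (h * h) = (\<Sum>j\<in>UNIV. g j * \<sigma> j)" by simp
  moreover have "sos_le (d j) (\<sigma> j)" for j
  proof (cases "j = i")
    case True
    then show ?thesis using h unfolding sos_le_def \<sigma>_def by (intro exI[of _ "[h]"]) simp
  next
    case False
    then show ?thesis unfolding sos_le_def \<sigma>_def by (intro exI[of _ "[]"]) simp
  qed
  ultimately show ?thesis unfolding WSOS_def by blast
qed

lemma wsos_all: "(\<Sum>i\<in>UNIV. g i * (hp i a * hp i a)) \<in> WSOS g d"
proof -
  have "sos_le (d i) (hp i a * hp i a)" for i
    unfolding sos_le_def using hp_deg by (intro exI[of _ "[hp i a]"]) simp
  then show ?thesis unfolding WSOS_def by (intro CollectI exI[of _ "\<lambda>i. hp i a * hp i a"]) simp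
qed

lemma WSOS_V: "s \<in> WSOS g d \<Longrightarrow> s \<in> Vspace g d"
proof -
  assume "s \<in> WSOS g d"
  then obtain \<sigma> where s: "s = (\<Sum>i\<in>UNIV. g i * \<sigma> i)" and sos: "\<And>i. sos_le (d i) (\<sigma> i)"
    unfolding WSOS_def by blast
  have "g i * \<sigma> i \<in> Vspace g d" for i
  proof -
    obtain hs where hs: "\<forall>h\<in>set hs. deg_le (d i) h" "\<sigma> i = sum_list (map (\<lambda>h. h * h) hs)"
      using sos[of i] unfolding sos_le_def by blast
    have "\<forall>h\<in>set hs. deg_le (d i) h \<Longrightarrow> g i * sum_list (map (\<lambda>h. h * h) hs) \<in> Vspace g d"
      by (induction hs) (auto simp: V_zero distrib_left intro!: V_add ghh_V)
    then show ?thesis using hs by simp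
  qed
  then show ?thesis using s by (auto intro: V_sum)
qed

lemma psd_SD: "psd (L x) \<Longrightarrow> x \<in> SigmaD q g d"
  unfolding SigmaD_def dual_cone_def SigmaC_def
proof (clarsimp)
  fix s assume ps: "psd (L x)" and s: "s \<in> WSOS g d"
  then obtain \<sigma> where s: "s = (\<Sum>i\<in>UNIV. g i * \<sigma> i)" and sos: "\<And>i. sos_le (d i) (\<sigma> i)"
    unfolding WSOS_def by blast
  have one: "deg_le (d i) h \<Longrightarrow> 0 \<le> x \<bullet> coordv q (g i * (h * h))" for i h
  proof -
    assume "deg_le (d i) h"
    then obtain a where "h = hp i a" using deg_hp by blast
    then show ?thesis using gram1[of x i a] ps by (simp add: psd_def qf_def)
  qed
  have each: "g i * \<sigma> i \<in> Vspace g d \<and> 0 \<le> x \<bullet> coordv q (g i * \<sigma> i)" for i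
  proof -
    obtain hs where hs: "\<forall>h\<in>set hs. deg_le (d i) h" "\<sigma> i = sum_list (map (\<lambda>h. h * h) hs)"
      using sos[of i] unfolding sos_le_def by blast
    have "\<forall>h\<in>set hs. deg_le (d i) h \<Longrightarrow> g i * sum_list (map (\<lambda>h. h * h) hs) \<in> Vspace g d \<and>
            0 \<le> x \<bullet> coordv q (g i * sum_list (map (\<lambda>h. h * h) hs))"
    proof (induction hs)
      case Nil then show ?case by (simp add: V_zero)
    next
      case (Cons h hs)
      then have h: "deg_le (d i) h" and IH: "g i * sum_list (map (\<lambda>h. h * h) hs) \<in> Vspace g d"
        "0 \<le> x \<bullet> coordv q (g i * sum_list (map (\<lambda>h. h * h) hs))" by auto
      have "g i * sum_list (map (\<lambda>h. h * h) (h # hs)) = g i * (h * h) + g i * sum_list (map (\<lambda>h. h * h) hs)"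
        by (simp add: distrib_left)
      then show ?case using IH ghh_V[OF h] one[OF h]
        by (simp add: V_add coord_add inner_add_right del: sum_list.Cons)
    qed
    then show ?thesis using hs by simp
  qed
  have "coordv q s = (\<Sum>i\<in>UNIV. coordv q (g i * \<sigma> i))" using each s by (simp add: coord_sum)
  then show "0 \<le> x \<bullet> coordv q s" using each by (simp add: inner_sum_right sum_nonneg)
qed

lemma SD_psd:
  assumes x: "x \<in> SigmaD q g d" shows "psd (L x)"
  unfolding psd_def qf_def
proof
  fix a
  have "0 \<le> ab i a \<bullet> (L x *v ab i a)" for i
  proof -
    have mem: "coordv q (g i * (hp i a * hp i a)) \<in> SigmaC q g d"
      unfolding SigmaC_def by (rule imageI, rule wsos_single[OF hp_deg])
    have "0 \<le> x \<bullet> coordv q (g i * (hp i a * hp i a))"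
      using x mem unfolding SigmaD_def dual_cone_def by blast
    then show ?thesis by (simp only: gram1)
  qed
  then show "0 \<le> a \<bullet> (L x *v a)" by (subst qf_blocks) (simp add: sum_nonneg)
qed

lemma SD_iff: "x \<in> SigmaD q g d \<longleftrightarrow> psd (L x)"
  using SD_psd psd_SD by blast

lemma Ls_outer: "Ls (outer a a) = coordv q (\<Sum>i\<in>UNIV. g i * (hp i a * hp i a))"
proof (rule inner_ext)
  fix w
  have mem: "g i * (hp i a * hp i a) \<in> Vspace g d" for i by (rule ghh_V[OF hp_deg])
  have "Ls (outer a a) \<bullet> w = a \<bullet> (L w *v a)" by (simp add: Ls_adj outer_outer_inner)
  also have "\<dots> = (\<Sum>i\<in>UNIV. w \<bullet> coordv q (g i * (hp i a * hp i a)))" by (simp only: qf_blocks[of a w] gram1)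
  also have "\<dots> = coordv q (\<Sum>i\<in>UNIV. g i * (hp i a * hp i a)) \<bullet> w"
    by (simp add: coord_sum mem inner_sum_right inner_commute)
  finally show "Ls (outer a a) \<bullet> w = coordv q (\<Sum>i\<in>UNIV. g i * (hp i a * hp i a)) \<bullet> w" .
qed

lemma Ls_outer_SC: "Ls (outer a a) \<in> SigmaC q g d"
  unfolding Ls_outer SigmaC_def using wsos_all by blast

end

context wsos begin

abbreviation SC where "SC \<equiv> SigmaC q g d"
abbreviation SD where "SD \<equiv> SigmaD q g d"

lemma SC_cone: "Convex.cone SC" and SC_convex: "convex SC" and SC_closed: "closed SC"
  and SC_int: "interior SC \<noteq> {}"
  using proper by (auto simp: proper_cone_def)

lemma SC_scale: "s \<in> SC \<Longrightarrow> 0 \<le> c \<Longrightarrow> c *\<^sub>R s \<in> SC"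
  using SC_cone by (simp add: Convex.cone_def)

lemma SC_add: "s \<in> SC \<Longrightarrow> t \<in> SC \<Longrightarrow> s + t \<in> SC"
proof -
  assume "s \<in> SC" "t \<in> SC"
  then have "(1/2) *\<^sub>R s + (1/2) *\<^sub>R t \<in> SC" by (intro convexD[OF SC_convex]) auto
  then have "2 *\<^sub>R ((1/2) *\<^sub>R s + (1/2) *\<^sub>R t) \<in> SC" by (rule SC_scale) simp
  then show "s + t \<in> SC" by (simp add: scaleR_add_right)
qed

lemma SC_zero: "0 \<in> SC"
proof -
  obtain z where "z \<in> interior SC" using SC_int by blast
  then have "z \<in> SC" using interior_subset by blast
  then have "0 *\<^sub>R z \<in> SC" by (rule SC_scale) simp
  then show ?thesis by simp
qed

lemma SC_sum: "(\<And>j. j \<in> A \<Longrightarrow> f j \<in> SC) \<Longrightarrow> sum f A \<in> SC"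
  by (induction A rule: infinite_finite_induct) (auto simp: SC_zero SC_add)

lemma Ls_psd_SC: "psd M \<Longrightarrow> symm M \<Longrightarrow> Ls M \<in> SC"
proof -
  assume "psd M" "symm M"
  then obtain n :: nat and v where M: "M = (\<Sum>j<n. outer (v j) (v j))" using psd_decomp by blast
  show "Ls M \<in> SC" unfolding M Ls_sum by (intro SC_sum Ls_outer_SC)
qed

lemma SD_inner: "x \<in> SD \<Longrightarrow> s \<in> SC \<Longrightarrow> 0 \<le> x \<bullet> s"
  by (simp add: SigmaD_def dual_cone_def)

lemma L_inj: "L w = 0 \<Longrightarrow> w = 0"
proof (rule ccontr)
  assume Lw: "L w = 0" and w0: "w \<noteq> 0"
  have "psd (L w)" "psd (L (- w))" using Lw L_scale[of "-1" w] by (auto simp: psd_def qf_def)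
  then have "w \<in> SD" "- w \<in> SD" using psd_SD by auto
  then have orth: "s \<in> SC \<Longrightarrow> w \<bullet> s = 0" for s using SD_inner[of w s] SD_inner[of "-w" s] by simp
  obtain z where "z \<in> interior SC" using SC_int by blast
  then obtain e where e0: "e > 0" and ball: "ball z e \<subseteq> SC" using mem_interior by blast
  define c where "c = e / (2 * norm w)"
  have c0: "c > 0" using e0 w0 by (simp add: c_def)
  have "z + c *\<^sub>R w \<in> ball z e" using e0 w0 by (simp add: c_def dist_norm)
  then have "w \<bullet> (z + c *\<^sub>R w) = 0" using ball orth by blast
  moreover have "w \<bullet> z = 0" using orth ball e0 by (simp add: subset_iff)
  ultimately have "c * (w \<bullet> w) = 0" by (simp add: inner_add_right)
  then show False using c0 w0 by simp
qed

lemma L_adjoint: "adjoint L = Ls"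
  by (rule adjoint_unique) (metis Ls_adj inner_commute)

lemma Ls_surj: "surj Ls"
proof -
  have "inj L" using L_inj L_linear by (metis linear_injective_0)
  then show ?thesis using surj_adjoint_iff_inj[OF L_linear] by (simp add: L_adjoint)
qed

lemma L_cont: "continuous_on UNIV L"
  by (rule linear_continuous_on) (simp add: L_linear linear_conv_bounded_linear[symmetric])

lemma Ls_cont: "continuous_on UNIV Ls"
  by (rule linear_continuous_on) (simp add: Ls_linear linear_conv_bounded_linear[symmetric])

lemma pd_int_SD: "pd (L x) \<Longrightarrow> x \<in> interior SD"
proof -
  assume pdx: "pd (L x)"
  have "open (L -` {M. pd M} \<inter> UNIV)"
    using continuous_on_open_vimage[OF open_UNIV, of L] L_cont pd_open by blast
  then have op: "open (L -` {M. pd M})" by simp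
  moreover have "L -` {M. pd M} \<subseteq> SD" using psd_SD pd_psd by auto
  ultimately show ?thesis using pdx by (intro interiorI[of "L -` {M. pd M}"]) auto
qed

lemma int_SD_pd: "x \<in> interior SD \<Longrightarrow> pd (L x)"
proof -
  assume xi: "x \<in> interior SD"
  then have "x \<in> SD" using interior_subset by blast
  then have ps: "psd (L x)" by (rule SD_psd)
  obtain e where e0: "e > 0" and ball: "ball x e \<subseteq> SD" using xi mem_interior by blast
  show "pd (L x)" unfolding pd_def
  proof (intro allI impI, rule ccontr)
    fix a :: "real^'k" assume a0: "a \<noteq> 0" and nq: "\<not> 0 < qf (L x) a"
    have "0 \<le> qf (L x) a" using ps psd_def by blast
    then have q0: "qf (L x) a = 0" using nq by linarith
    have "(b \<bullet> (L x *v a))^2 \<le> 0" for b using psd_cs[OF ps L_symm, of b a] q0 by simp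
    then have "b \<bullet> (L x *v a) = 0" for b by simp
    then have La: "L x *v a = 0" by (metis inner_eq_zero_iff)
    obtain k0 where k0: "a $ k0 \<noteq> 0" using a0 by (metis vec_eq_iff zero_index)
    define i where "i = blk k0"
    define s where "s = coordv q (g i * (hp i a * hp i a))"
    have sSC: "s \<in> SC" unfolding s_def SigmaC_def by (rule imageI, rule wsos_single[OF hp_deg])
    have ab0: "ab i 0 = 0" by (simp add: ab_def vec_eq_iff)
    have xs: "x \<bullet> s = 0" unfolding s_def gram1 ab_mv La ab0 by simp
    have s0: "s = 0"
    proof (rule ccontr)
      assume "s \<noteq> 0"
      define y where "y = x - (e / (2 * norm s)) *\<^sub>R s"
      have "y \<in> ball x e" using e0 \<open>s \<noteq> 0\<close> by (simp add: y_def dist_norm)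
      then have "0 \<le> y \<bullet> s" using ball sSC SD_inner by blast
      also have "y \<bullet> s = - (e / (2 * norm s)) * (s \<bullet> s)" by (simp add: y_def xs inner_diff_left)
      finally have "e * (s \<bullet> s) / (2 * norm s) \<le> 0" by simp
      moreover have "0 < e * (s \<bullet> s) / (2 * norm s)" using e0 \<open>s \<noteq> 0\<close> by (intro divide_pos_pos mult_pos_pos) auto
      ultimately show False by linarith
    qed
    have "g i * (hp i a * hp i a) = 0" using coord_inj[OF ghh_V[OF hp_deg]] s0 by (simp add: s_def)
    then have "hp i a * hp i a = 0" using g_nz mpoly_no_zero_div by metis
    then have "hp i a = 0" using mpoly_no_zero_div by metis
    then have "a $ k0 = 0" using hindep[where i=i and a="\<lambda>k. a $ k" and k=k0] by (simp add: hp_def i_def Blk_def)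
    then show False using k0 by simp
  qed
qed

lemma int_SD_iff: "x \<in> interior SD \<longleftrightarrow> pd (L x)"
  using int_SD_pd pd_int_SD by blast

lemma Ls_pd_int: "pd M \<Longrightarrow> Ls M \<in> interior SC"
proof -
  assume pM: "pd M"
  have "open (Ls ` {X. pd X})" by (rule open_surjective_linear_image[OF pd_open Ls_linear Ls_surj])
  moreover have "Ls ` {X. pd X} \<subseteq> SC"
  proof
    fix y assume "y \<in> Ls ` {X. pd X}"
    then obtain X where pX: "pd X" and y: "y = Ls X" by blast
    define Y where "Y = (1/2) *\<^sub>R (X + transpose X)"
    have qT: "qf (transpose X) a = qf X a" for a
      unfolding qf_def transpose_matrix_vector by (metis dot_lmul_matrix inner_commute)
    have "pd Y" using pX by (simp add: pd_def Y_def qf_scale qf_plus qT)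
    moreover have "symm Y" by (simp add: Y_def symm_def transpose_def vec_eq_iff add.commute)
    ultimately have "Ls Y \<in> SC" using Ls_psd_SC pd_psd by blast
    moreover have "Ls Y = Ls X"
    proof -
      have "Ls Y = (1/2) *\<^sub>R (Ls X + Ls X)" by (simp add: Y_def Ls_scale Ls_add Ls_transpose)
      also have "\<dots> = Ls X" by (simp only: scaleR_2[symmetric] scaleR_scaleR) simp
      finally show ?thesis .
    qed
    ultimately show "y \<in> SC" using y by simp
  qed
  ultimately show ?thesis using pM by (intro interiorI[of "Ls ` {X. pd X}"]) auto
qed

end

context wsos begin

definition Gm :: "real^'u \<Rightarrow> real^'u" where "Gm y = Ls (matrix_inv (L y))"
abbreviation H where "H \<equiv> hessM q g blk p"

lemma grad_Gm: "- gradf q g blk p y = Gm y"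
  by (simp add: gradf_def Gm_def)

lemma hessf_linear: "linear (hessf q g blk p x)"
  by (rule linearI)
    (simp_all add: hessf_def L_add L_scale matrix_add_ldistrib mm_add_r Ls_add Ls_scale)

lemma H_mv: "H x *v w = hessf q g blk p x w"
proof -
  have "H x = matrix (hessf q g blk p x)" by (simp add: hessM_def matrix_def)
  then show ?thesis using matrix_vector_mul(2)[OF hessf_linear, of x] by (metis)
qed

lemma H_form: "w \<bullet> (H x *v v) = beta (matrix_inv (L x)) (L v) (L w)"
  by (simp add: H_mv hessf_def inner_commute[of w] Ls_adj beta_def)

lemma mm_neg_r: "(X::real^'k^'k) ** (- A) = - (X ** A)"
  by (simp add: vec_eq_iff matrix_matrix_mult_def sum_negf)
lemma mm_neg_l: "(- A) ** (X::real^'k^'k) = - (A ** X)"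
  by (simp add: vec_eq_iff matrix_matrix_mult_def sum_negf)
lemma beta_neg: "beta X (- A) (- A) = beta X A A"
  by (simp add: beta_def frob matrix_matrix_mult_def sum_negf)

lemma H_sym_form:
  assumes "pd (L x)"
  shows "w \<bullet> (H x *v v) = v \<bullet> (H x *v w)"
  using beta_sym[OF pd_inv(3)[OF assms L_symm] L_symm L_symm] by (simp add: H_form)

lemma H_symm: "pd (L x) \<Longrightarrow> symm (H x)"
proof -
  assume a: "pd (L x)"
  have "H x $ u $ v = H x $ v $ u" for u v
  proof -
    have "H x $ u $ v = axis u 1 \<bullet> (H x *v axis v 1)"
      by (simp add: inner_commute[of "axis u 1"] cart_eq_inner_axis[symmetric] mv_axis)
    also have "\<dots> = axis v 1 \<bullet> (H x *v axis u 1)" by (rule H_sym_form[OF a])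
    also have "\<dots> = H x $ v $ u"
      by (simp add: inner_commute[of "axis v 1"] cart_eq_inner_axis[symmetric] mv_axis)
    finally show ?thesis .
  qed
  then show "symm (H x)" by (simp add: symm_def transpose_def vec_eq_iff)
qed

lemma H_pd: "pd (L x) \<Longrightarrow> pd (H x)"
  unfolding pd_def[of "H x"]
proof (intro allI impI)
  fix w :: "real^'u" assume a: "pd (L x)" and w0: "w \<noteq> 0"
  have ge: "0 \<le> beta (matrix_inv (L x)) (L w) (L w)"
    by (rule beta_nonneg[OF pd_inv(5)[OF a L_symm] pd_inv(3)[OF a L_symm]])
  have "beta (matrix_inv (L x)) (L w) (L w) \<noteq> 0"
  proof
    assume "beta (matrix_inv (L x)) (L w) (L w) = 0"
    then have "L w = 0" by (rule beta_zero[OF a L_symm L_symm])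
    then show False using L_inj w0 by blast
  qed
  then show "0 < qf (H x) w" using ge by (simp add: qf_def H_form)
qed

lemma H_x: "pd (L x) \<Longrightarrow> H x *v x = Gm x"
  by (simp add: H_mv hessf_def Gm_def pd_inv[OF _ L_symm] matrix_mul_assoc[symmetric])

definition lnrm where "lnrm x v = sqrt (v \<bullet> (H x *v v))"

lemma lnrm_nonneg: "pd (L x) \<Longrightarrow> 0 \<le> lnrm x v"
  using pd_psd[OF H_pd] by (simp add: lnrm_def psd_def qf_def)
definition dnrm where "dnrm x s = sqrt (s \<bullet> (matrix_inv (H x) *v s))"

lemma lnorm_eq: "lnorm q g blk p x v = lnrm x v" by (simp add: lnorm_def lnrm_def)
lemma dnorm_eq: "dnorm q g blk p x s = dnrm x s" by (simp add: dnorm_def dnrm_def hess_inv_app_def)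

lemma lnrm_sq: "pd (L x) \<Longrightarrow> (lnrm x v)^2 = beta (matrix_inv (L x)) (L v) (L v)"
proof -
  assume a: "pd (L x)"
  have "0 \<le> v \<bullet> (H x *v v)" using pd_psd[OF H_pd[OF a]] by (simp add: psd_def qf_def)
  then show ?thesis by (simp add: lnrm_def H_form)
qed

lemma cs_dual:
  assumes a: "pd (L x)"
  shows "t \<bullet> w \<le> dnrm x t * lnrm x w"
proof -
  have pH: "pd (H x)" and sH: "symm (H x)" using H_pd[OF a] H_symm[OF a] by auto
  define z where "z = matrix_inv (H x) *v t"
  have Hz: "H x *v z = t" by (simp add: z_def inv_mv[OF pH sH])
  have "t \<bullet> w = z \<bullet> (H x *v w)"
    by (simp add: Hz[symmetric] symm_mv[OF sH, of z w] inner_commute)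
  also have "\<dots> \<le> \<bar>z \<bullet> (H x *v w)\<bar>" by simp
  also have "\<dots> = sqrt ((z \<bullet> (H x *v w))^2)" by simp
  also have "\<dots> \<le> sqrt (qf (H x) z * qf (H x) w)"
    by (rule real_sqrt_le_mono[OF psd_cs[OF pd_psd[OF pH] sH]])
  also have "qf (H x) z = t \<bullet> (matrix_inv (H x) *v t)" by (simp add: qf_def Hz) (simp add: z_def inner_commute)
  also have "sqrt (t \<bullet> (matrix_inv (H x) *v t) * qf (H x) w) = dnrm x t * lnrm x w"
    by (simp add: dnrm_def lnrm_def qf_def real_sqrt_mult)
  finally show ?thesis .
qed

lemma newton_bound:
  assumes px: "pd (L x)" and py: "pd (L y)" and r0: "0 < r"
    and dn: "dnrm x (Gm y - Gm x) \<le> r / (1 + r)"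
  shows "lnrm x (x - y) \<le> r"
proof -
  define P where "P = L x"
  define Q where "Q = L y"
  define b where "b = beta (matrix_inv P) (Q - P) (Q - P)"
  define \<delta> where "\<delta> = sqrt b"
  have sP: "symm P" and sQ: "symm Q" by (simp_all add: P_def Q_def L_symm)
  have b0: "0 \<le> b" unfolding b_def by (rule beta_nonneg[OF pd_inv(5)[OF px[folded P_def] sP] pd_inv(3)[OF px[folded P_def] sP]])
  have d0: "0 \<le> \<delta>" using b0 by (simp add: \<delta>_def)
  have QP: "Q - P = L (y - x)" by (simp add: P_def Q_def L_diff)
  have ln: "lnrm x (x - y) = \<delta>"
  proof -
    have e: "L (x - y) = - (Q - P)" by (simp add: P_def Q_def L_diff)
    have "(lnrm x (x - y))^2 = beta (matrix_inv P) (L (x - y)) (L (x - y))" using lnrm_sq[OF px] by (simp add: P_def)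
    also have "\<dots> = beta (matrix_inv P) (- (Q - P)) (- (Q - P))" by (simp only: e)
    also have "\<dots> = b" by (simp only: beta_neg b_def)
    finally have "(lnrm x (x - y))^2 = b" .
    moreover have "0 \<le> lnrm x (x - y)" by (rule lnrm_nonneg[OF px])
    ultimately show ?thesis by (simp add: \<delta>_def real_sqrt_unique)
  qed
  have "(Gm y - Gm x) \<bullet> (y - x) = (matrix_inv Q - matrix_inv P) \<bullet> (Q - P)"
    by (simp add: Gm_def Ls_diff[symmetric] Ls_adj P_def Q_def L_diff)
  also have "\<dots> \<le> - b / (1 + \<delta>)"
    unfolding b_def \<delta>_def by (rule key_ineq[OF px[folded P_def] sP py[folded Q_def] sQ])
  finally have k: "b / (1 + \<delta>) \<le> (Gm y - Gm x) \<bullet> (x - y)"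
    by (simp add: inner_diff_right algebra_simps)
  also have "\<dots> \<le> dnrm x (Gm y - Gm x) * lnrm x (x - y)" by (rule cs_dual[OF px])
  also have "\<dots> \<le> r / (1 + r) * \<delta>" unfolding ln by (rule mult_right_mono[OF dn d0])
  finally have ineq: "\<delta>^2 / (1 + \<delta>) \<le> r / (1 + r) * \<delta>" using b0 by (simp add: \<delta>_def)
  show ?thesis
  proof (cases "\<delta> = 0")
    case True then show ?thesis using ln r0 by simp
  next
    case False
    then have dp: "0 < \<delta>" using d0 by simp
    have p1: "0 < 1 + \<delta>" "0 < 1 + r" using dp r0 by auto
    from ineq have "\<delta>^2 \<le> r / (1 + r) * \<delta> * (1 + \<delta>)" using p1 by (simp add: divide_le_eq)
    then have "\<delta>^2 * (1 + r) \<le> r * \<delta> * (1 + \<delta>)" using p1 by (simp add: field_simps)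
    then have "\<delta> * (\<delta> * (1 + r)) \<le> \<delta> * (r * (1 + \<delta>))" by (simp add: power2_eq_square algebra_simps)
    then have "\<delta> * (1 + r) \<le> r * (1 + \<delta>)" using dp by (simp add: mult_le_cancel_left_pos)
    then show ?thesis using ln by (simp add: algebra_simps)
  qed
qed

lemma dikin_cert:
  assumes px: "pd (L x)" and c0: "0 < c" and lv: "lnrm x v < c"
  shows "pd (L (c *\<^sub>R x + v))"
proof -
  define P where "P = L x"
  have sP: "symm P" by (simp add: P_def L_symm)
  have "beta (matrix_inv P) ((1/c) *\<^sub>R L v) ((1/c) *\<^sub>R L v) = (1/c)^2 * (lnrm x v)^2"
    using lnrm_sq[OF px, of v] by (simp add: beta_def P_def power2_eq_square)
  also have "\<dots> < 1"
  proof -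
    have "0 \<le> lnrm x v" by (rule lnrm_nonneg[OF px])
    then have "(lnrm x v)^2 < c^2" using lv by (simp add: power_strict_mono)
    then show ?thesis using c0 by (simp add: field_simps power2_eq_square)
  qed
  finally have "pd (P + (1/c) *\<^sub>R L v)"
    by (intro dikin_pd[OF px[folded P_def] sP]) (simp_all add: symm_scale L_symm)
  then have "pd (c *\<^sub>R (P + (1/c) *\<^sub>R L v))" using c0 by (rule pd_scale)
  moreover have "c *\<^sub>R (P + (1/c) *\<^sub>R L v) = L (c *\<^sub>R x + v)"
    using c0 by (simp add: P_def L_add L_scale scaleR_add_right)
  ultimately show ?thesis by simp
qed

end

context wsos begin

lemma Gm_cont_at:
  assumes px: "pd (L y0)"
  shows "isCont Gm y0"
proof -
  obtain r C where r0: "r > 0" and h: "\<And>N. norm (N - L y0) < r \<Longrightarrow> pd N \<and>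
      norm (matrix_inv N - matrix_inv (L y0)) \<le> C * norm (N - L y0)"
    using inv_lip[OF px] by blast
  have blL: "bounded_linear L" using L_linear linear_conv_bounded_linear by blast
  have blS: "bounded_linear Ls" using Ls_linear linear_conv_bounded_linear by blast
  obtain KL where KL: "KL > 0" "\<And>z. norm (L z) \<le> norm z * KL"
    using bounded_linear.pos_bounded[OF blL] by blast
  obtain KS where KS: "KS > 0" "\<And>M. norm (Ls M) \<le> norm M * KS"
    using bounded_linear.pos_bounded[OF blS] by blast
  define C' where "C' = \<bar>C\<bar> + 1"
  have C'0: "C' > 0" by (simp add: C'_def)
  show ?thesis unfolding continuous_at_eps_delta
  proof (intro allI impI)
    fix e :: real assume e0: "e > 0"
    define dd where "dd = min (r / KL) (e / (KS * C' * KL))"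
    have dd0: "dd > 0" using r0 KL e0 KS C'0 by (simp add: dd_def)
    show "\<exists>d>0. \<forall>y. dist y y0 < d \<longrightarrow> dist (Gm y) (Gm y0) < e"
    proof (intro exI[of _ dd] conjI dd0 allI impI)
      fix y assume "dist y y0 < dd"
      then have ny: "norm (y - y0) < dd" by (simp add: dist_norm)
      have nL: "norm (L y - L y0) \<le> norm (y - y0) * KL" using KL(2)[of "y - y0"] by (simp add: L_diff)
      have "norm (y - y0) * KL < dd * KL" using ny KL by simp
      also have "dd * KL \<le> r" using KL by (simp add: dd_def min_def field_simps)
      finally have "norm (L y - L y0) < r" using nL by linarith
      then have ineq: "norm (matrix_inv (L y) - matrix_inv (L y0)) \<le> C * norm (L y - L y0)" using h by blast
      have "dist (Gm y) (Gm y0) = norm (Ls (matrix_inv (L y) - matrix_inv (L y0)))"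
        by (simp add: dist_norm Gm_def Ls_diff)
      also have "\<dots> \<le> norm (matrix_inv (L y) - matrix_inv (L y0)) * KS" by (rule KS(2))
      also have "\<dots> \<le> (C' * (norm (y - y0) * KL)) * KS"
      proof (rule mult_right_mono)
        have "C * norm (L y - L y0) \<le> C' * norm (L y - L y0)"
          by (intro mult_right_mono) (auto simp: C'_def)
        also have "\<dots> \<le> C' * (norm (y - y0) * KL)" using nL C'0 by (intro mult_left_mono) auto
        finally show "norm (matrix_inv (L y) - matrix_inv (L y0)) \<le> C' * (norm (y - y0) * KL)"
          using ineq by linarith
      qed (use KS in auto)
      also have "\<dots> = (KS * C' * KL) * norm (y - y0)" by (simp add: mult_ac)
      also have "\<dots> < (KS * C' * KL) * dd" using ny KS KL C'0 by simp
      also have "\<dots> \<le> e" using KS KL C'0 by (simp add: dd_def min_def field_simps)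
      finally show "dist (Gm y) (Gm y0) < e" .
    qed
  qed
qed

lemma Gm_cont: "continuous_on (interior SD) Gm"
  by (intro continuous_at_imp_continuous_on ballI Gm_cont_at int_SD_pd)

lemma dnrm_zero: "dnrm x 0 = 0" by (simp add: dnrm_def)

lemma lnrm_zero_iff: "pd (L x) \<Longrightarrow> lnrm x v = 0 \<Longrightarrow> v = 0"
proof (rule ccontr)
  assume px: "pd (L x)" and l: "lnrm x v = 0" and v: "v \<noteq> 0"
  have "0 < v \<bullet> (H x *v v)" using H_pd[OF px] v by (simp add: pd_def qf_def)
  then show False using l by (simp add: lnrm_def)
qed

lemma Gm_inj:
  assumes px: "pd (L x)" and py: "pd (L y)" and e: "Gm x = Gm y"
  shows "x = y"
proof -
  have le: "lnrm x (x - y) \<le> r" if "r > 0" for r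
    by (rule newton_bound[OF px py that]) (use e that in \<open>simp add: dnrm_zero\<close>)
  have l0: "0 \<le> lnrm x (x - y)" by (rule lnrm_nonneg[OF px])
  have "lnrm x (x - y) = 0"
  proof (rule ccontr)
    assume "lnrm x (x - y) \<noteq> 0"
    then have "0 < lnrm x (x - y)" using l0 by simp
    then have "lnrm x (x - y) \<le> lnrm x (x - y) / 2" using le[of "lnrm x (x - y) / 2"] by simp
    then show False using \<open>0 < lnrm x (x - y)\<close> by simp
  qed
  then have "x - y = 0" by (rule lnrm_zero_iff[OF px])
  then show ?thesis by simp
qed

lemma Gm_int: "pd (L y) \<Longrightarrow> Gm y \<in> interior SC"
  unfolding Gm_def by (rule Ls_pd_int[OF pd_inv(4)[OF _ L_symm]])

lemma mat1_inner: "(mat 1 :: real^'k^'k) \<bullet> mat 1 = real CARD('k)"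
  by (simp add: frob mat_def if_distrib[of "\<lambda>z. z * _"] cong: if_cong)

lemma Gm_self: "pd (L y) \<Longrightarrow> Gm y \<bullet> y = real CARD('k)"
proof -
  assume py: "pd (L y)"
  have "Gm y \<bullet> y = matrix_inv (L y) \<bullet> L y" by (simp add: Gm_def Ls_adj)
  also have "\<dots> = (matrix_inv (L y) ** L y) \<bullet> mat 1"
    by (simp add: frob_mul2 symm_transpose[OF L_symm])
  also have "\<dots> = real CARD('k)" by (simp add: pd_inv[OF py L_symm] mat1_inner)
  finally show ?thesis .
qed

lemma SD_closed: "closed SD"
proof -
  have "SD = (\<Inter>s\<in>SC. {x. s \<bullet> x \<ge> 0})"
    by (auto simp: SigmaD_def dual_cone_def inner_commute)
  then show ?thesis by (simp add: closed_INT closed_halfspace_ge)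
qed

lemma int_SC_bound:
  assumes ball: "ball s e \<subseteq> SC" and e0: "e > 0" and ds: "dist s' s < e/2" and y: "y \<in> SD"
  shows "(e/2) * norm y \<le> s' \<bullet> y"
proof (cases "y = 0")
  case True then show ?thesis by simp
next
  case False
  define z where "z = s' - ((e/2) / norm y) *\<^sub>R y"
  have "dist z s' = e/2" using False e0 by (simp add: z_def dist_norm)
  then have "dist z s < e" using ds dist_triangle[of z s s'] by linarith
  then have "z \<in> SC" using ball by (auto simp: dist_commute)
  then have "0 \<le> y \<bullet> z" by (rule SD_inner[OF y])
  also have "y \<bullet> z = s' \<bullet> y - (e/2) * norm y"
    using False by (simp add: z_def inner_diff_right inner_commute power2_norm_eq_inner[symmetric] power2_eq_square)
  finally show ?thesis by simp
qed

end

context wsos begin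

lemma Gm_closed_part:
  assumes x0: "pd (L x0)" and s: "s \<in> interior SC" and cl: "s \<in> closure (Gm ` interior SD)"
  shows "s \<in> Gm ` interior SD"
proof -
  obtain yy where yy: "\<forall>n. yy n \<in> Gm ` interior SD" and lim: "yy \<longlonglongrightarrow> s"
    using cl closure_sequential by blast
  define y where "y n = (SOME z. z \<in> interior SD \<and> Gm z = yy n)" for n
  have y: "y n \<in> interior SD \<and> Gm (y n) = yy n" for n
  proof -
    have "yy n \<in> Gm ` interior SD" using yy by blast
    then obtain z where z: "z \<in> interior SD" "yy n = Gm z" by (rule imageE)
    show ?thesis unfolding y_def by (rule someI[of _ z]) (use z in simp)
  qed
  have pdy: "pd (L (y n))" for n using y int_SD_pd by blast
  have ySD: "y n \<in> SD" for n using y interior_subset by blast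
  obtain e where e0: "e > 0" and ball: "ball s e \<subseteq> SC" using s mem_interior by blast
  have e2: "e/2 > 0" using e0 by simp
  obtain N where N: "\<And>n. n \<ge> N \<Longrightarrow> dist (yy n) s < e/2"
    using lim e2 unfolding lim_sequentially by blast
  define R where "R = 2 * real CARD('k) / e"
  have bnd: "norm (y n) \<le> R" if "n \<ge> N" for n
  proof -
    have "(e/2) * norm (y n) \<le> yy n \<bullet> y n" by (rule int_SC_bound[OF ball e0 N[OF that] ySD])
    also have "\<dots> = real CARD('k)" using Gm_self[OF pdy[of n]] y[of n] by simp
    finally show ?thesis using e0 by (simp add: R_def field_simps)
  qed
  define z where "z n = y (n + N)" for n
  have zin: "\<forall>n. z n \<in> cball 0 R" using bnd by (simp add: z_def)
  have sc: "seq_compact (cball (0::real^'u) R)" by (rule compact_imp_seq_compact) simp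
  obtain l r where lc: "l \<in> cball 0 R" and r: "strict_mono (r :: nat \<Rightarrow> nat)"
    and zl: "(z \<circ> r) \<longlonglongrightarrow> l"
    using seq_compactE[OF sc zin] by blast
  have smr: "strict_mono (\<lambda>n. r n + N)" using r by (simp add: strict_mono_def)
  have Gzl: "(\<lambda>n. Gm (z (r n))) \<longlonglongrightarrow> s"
  proof -
    have "(yy \<circ> (\<lambda>n. r n + N)) \<longlonglongrightarrow> s" by (rule LIMSEQ_subseq_LIMSEQ[OF lim smr])
    then show ?thesis using y by (simp add: z_def o_def)
  qed
  have zSD: "\<And>n. (z \<circ> r) n \<in> SD" using ySD by (simp add: z_def)
  have lSD: "l \<in> SD" by (rule closed_sequentially[OF SD_closed zSD zl])
  show ?thesis
  proof (cases "pd (L l)")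
    case True
    have "(\<lambda>n. Gm ((z \<circ> r) n)) \<longlonglongrightarrow> Gm l"
      by (rule isCont_tendsto_compose[OF Gm_cont_at[OF True] zl])
    then have h: "(\<lambda>n. Gm (z (r n))) \<longlonglongrightarrow> Gm l" by (simp add: o_def)
    have "Gm l = s" by (rule LIMSEQ_unique[OF h Gzl])
    then show ?thesis using pd_int_SD[OF True] by blast
  next
    case False
    have psl: "psd (L l)" using SD_psd[OF lSD] .
    obtain a where a0: "a \<noteq> 0" and nq: "\<not> 0 < qf (L l) a" using False unfolding pd_def by blast
    have "0 \<le> qf (L l) a" using psl psd_def by blast
    then have ql: "qf (L l) a = 0" using nq by linarith
    define w where "w = Ls (outer a a)"
    have qw: "qf (L v) a = w \<bullet> v" for v by (simp add: w_def Ls_adj outer_outer_inner qf_def)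
    define t0 where "t0 = a \<bullet> (matrix_inv (L x0) *v a)"
    have ineq: "(a \<bullet> a)^2 \<le> (Gm (z (r n)) \<bullet> x0) * (t0 * (w \<bullet> z (r n)))" for n
    proof -
      have "(a \<bullet> a)^2 \<le> (matrix_inv (L (z (r n))) \<bullet> L x0) * ((a \<bullet> (matrix_inv (L x0) *v a)) * qf (L (z (r n))) a)"
        by (rule boundary_ineq[OF _ L_symm x0 L_symm a0]) (simp add: z_def pdy)
      then show ?thesis by (simp add: Gm_def Ls_adj t0_def qw)
    qed
    have "(\<lambda>n. (Gm (z (r n)) \<bullet> x0) * (t0 * (w \<bullet> z (r n)))) \<longlonglongrightarrow> (s \<bullet> x0) * (t0 * (w \<bullet> l))"
      by (intro tendsto_intros Gzl) (use zl in \<open>simp add: o_def\<close>)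
    moreover have "w \<bullet> l = 0" using ql qw by simp
    ultimately have "(\<lambda>n. (Gm (z (r n)) \<bullet> x0) * (t0 * (w \<bullet> z (r n)))) \<longlonglongrightarrow> 0" by simp
    then have "(a \<bullet> a)^2 \<le> 0" by (rule LIMSEQ_le_const) (use ineq in blast)
    then show ?thesis using a0 by simp
  qed
qed

lemma Gm_onto:
  assumes x0: "pd (L x0)"
  shows "Gm ` interior SD = interior SC"
proof -
  let ?T = "Gm ` interior SD"
  have sub: "?T \<subseteq> interior SC" using Gm_int int_SD_pd by blast
  have inj: "inj_on Gm (interior SD)" unfolding inj_on_def using Gm_inj int_SD_pd by blast
  have op: "open ?T" by (rule invariance_of_domain[OF Gm_cont open_interior inj])
  have ne: "?T \<noteq> {}" using pd_int_SD[OF x0] by blast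
  have conn: "connected (interior SC)" by (rule convex_connected[OF convex_interior[OF SC_convex]])
  have "openin (top_of_set (interior SC)) ?T" unfolding openin_open using op sub by blast
  moreover have "closedin (top_of_set (interior SC)) ?T"
    unfolding closedin_closed
  proof (intro exI[of _ "closure ?T"] conjI)
    show "closed (closure ?T)" by simp
    show "?T = interior SC \<inter> closure ?T"
      using sub closure_subset Gm_closed_part[OF x0] by blast
  qed
  ultimately show ?thesis using conn ne unfolding connected_clopen by blast
qed

lemma grad_cert_prop:
  assumes x0: "pd (L x0)" and s: "s \<in> interior SC"
  shows "grad_cert q g d blk p s \<in> interior SD \<and> Gm (grad_cert q g d blk p s) = s"
proof -
  have "s \<in> Gm ` interior SD" using s Gm_onto[OF x0] by simp
  then obtain y where y: "y \<in> interior SD" "Gm y = s" by blast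
  let ?P = "\<lambda>y. y \<in> interior SD \<and> - gradf q g blk p y = s"
  have ex: "?P y" using y by (simp add: grad_Gm)
  have un: "y1 = y" if "?P y1" for y1
  proof -
    have "Gm y1 = Gm y" using that y by (simp add: grad_Gm)
    then show ?thesis using Gm_inj int_SD_pd that y(1) by blast
  qed
  have "?P (THE y. ?P y)" by (rule theI[of ?P y, OF ex un]) 
  then show ?thesis by (simp add: grad_cert_def grad_Gm)
qed

end

lemma pd_sandwich:
  fixes M X :: "real^'n::finite^'n"
  assumes pM: "pd M" and pX: "pd X" and sX: "symm X"
  shows "pd (X ** M ** X)"
  unfolding pd_def
proof (intro allI impI)
  fix a :: "real^'n" assume a0: "a \<noteq> 0"
  have "X *v a \<noteq> 0"
  proof
    assume "X *v a = 0"
    then have "qf X a = 0" by (simp add: qf_def)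
    moreover have "0 < qf X a" using pX a0 by (simp add: pd_def)
    ultimately show False by simp
  qed
  then have "0 < qf M (X *v a)" using pM by (simp add: pd_def)
  also have "qf M (X *v a) = qf (X ** M ** X) a"
    by (simp add: qf_def matrix_vector_mul_assoc[symmetric] inner_transpose[of a X] symm_transpose[OF sX])
  finally show "0 < qf (X ** M ** X) a" .
qed

context wsos begin

lemma SD_scale: "y \<in> SD \<Longrightarrow> 0 \<le> c \<Longrightarrow> c *\<^sub>R y \<in> SD"
  by (simp add: SigmaD_def dual_cone_def)

lemma hessf_scale:
  assumes px: "pd (L x)" and c0: "c \<noteq> 0"
  shows "hessf q g blk p (c *\<^sub>R x) w = (1/c)^2 *\<^sub>R hessf q g blk p x w"
proof -
  have "matrix_inv (L (c *\<^sub>R x)) = (1/c) *\<^sub>R matrix_inv (L x)"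
    using inv_scale[OF px L_symm c0] by (simp add: L_scale)
  then show ?thesis by (simp add: hessf_def Ls_scale power2_eq_square)
qed

lemma H_scale:
  assumes px: "pd (L x)" and c0: "c \<noteq> 0"
  shows "H (c *\<^sub>R x) = (1/c)^2 *\<^sub>R H x"
  by (simp add: hessM_def vec_eq_iff hessf_scale[OF px c0])

lemma Gm_scale:
  assumes px: "pd (L x)" and c0: "c \<noteq> 0"
  shows "Gm (c *\<^sub>R x) = (1/c) *\<^sub>R Gm x"
  using inv_scale[OF px L_symm c0] by (simp add: Gm_def L_scale Ls_scale)

lemma main:
  fixes x :: "real^'u" and r :: real
  assumes one_int: "coordv q 1 \<in> interior SC"
    and x_int: "x \<in> interior SD"
    and one_P: "coordv q 1 \<in> interior (Pset q g d blk p x)"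
    and r_pos: "0 < r"
  shows "\<forall>t. (\<exists>C. \<forall>c\<ge>C. x \<in> certs q g d blk p (t + c *\<^sub>R coordv q 1)) \<and>
           (let x1 = grad_cert q g d blk p (coordv q 1) in
            \<forall>c>0. c \<ge> (1 + r) / r * dnorm q g blk p x1 t \<longrightarrow>
              t + c *\<^sub>R coordv q 1 \<in> interior SC \<and>
              x1 \<in> certs q g d blk p (t + c *\<^sub>R coordv q 1) \<and>
              lnorm q g blk p ((1/c) *\<^sub>R x1)
                 ((1/c) *\<^sub>R x1 - grad_cert q g d blk p (t + c *\<^sub>R coordv q 1)) \<le> r)"
proof (intro allI conjI)
  fix t :: "real^'u"
  define e1 where "e1 = coordv q 1"
  have pdx: "pd (L x)" by (rule int_SD_pd[OF x_int])
  show "\<exists>C. \<forall>c\<ge>C. x \<in> certs q g d blk p (t + c *\<^sub>R coordv q 1)"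
  proof -
    obtain \<epsilon> where \<epsilon>0: "\<epsilon> > 0" and ball: "ball e1 \<epsilon> \<subseteq> Pset q g d blk p x"
      using one_P mem_interior unfolding e1_def by blast
    define C where "C = 2 * norm t / \<epsilon> + 1"
    show ?thesis
    proof (intro exI[of _ C] allI impI)
      fix c assume cC: "C \<le> c"
      have c0: "c > 0" using cC \<epsilon>0 by (simp add: C_def) (smt (verit) divide_nonneg_pos norm_ge_zero)
      have Cp: "C > 0" using \<epsilon>0 unfolding C_def by (intro add_nonneg_pos divide_nonneg_pos) auto
      have "\<epsilon> * C = 2 * norm t + \<epsilon>" using \<epsilon>0 by (simp add: C_def field_simps)
      then have ntC: "norm t < \<epsilon> * C" using \<epsilon>0 norm_ge_zero[of t] by linarith
      have "norm ((1/c) *\<^sub>R t) = norm t / c" using c0 by simp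
      also have "norm t / c \<le> norm t / C"
        by (rule divide_left_mono[OF cC]) (use c0 Cp in auto)
      also have "norm t / C < \<epsilon>" using ntC Cp by (simp add: field_simps)
      finally have "norm ((1/c) *\<^sub>R t) < \<epsilon>" .
      then have "e1 + (1/c) *\<^sub>R t \<in> ball e1 \<epsilon>" by (simp add: dist_norm)
      then have "e1 + (1/c) *\<^sub>R t \<in> Pset q g d blk p x" using ball by blast
      then have h: "matrix_inv (H x) *v (e1 + (1/c) *\<^sub>R t) \<in> SD"
        by (simp add: Pset_def hess_inv_app_def)
      have "matrix_inv (H x) *v (t + c *\<^sub>R e1) = c *\<^sub>R (matrix_inv (H x) *v (e1 + (1/c) *\<^sub>R t))"
        using c0 by (simp add: matrix_vector_right_distrib matrix_vector_mult_scaleR scaleR_add_right add.commute)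
      then have "matrix_inv (H x) *v (t + c *\<^sub>R e1) \<in> SD" using SD_scale[OF h] c0 by simp
      then show "x \<in> certs q g d blk p (t + c *\<^sub>R coordv q 1)"
        using x_int by (simp add: certs_def hess_inv_app_def e1_def)
    qed
  qed
next
  fix t :: "real^'u"
  define e1 where "e1 = coordv q 1"
  have pdx: "pd (L x)" by (rule int_SD_pd[OF x_int])
  define x1 where "x1 = grad_cert q g d blk p e1"
  have x1: "x1 \<in> interior SD" "Gm x1 = e1"
    using grad_cert_prop[OF pdx one_int] by (auto simp: x1_def e1_def)
  have px1: "pd (L x1)" by (rule int_SD_pd[OF x1(1)])
  have pH: "pd (H x1)" and sH: "symm (H x1)" using H_pd[OF px1] H_symm[OF px1] by auto
  define Hi where "Hi = matrix_inv (H x1)"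
  have Hie: "Hi *v e1 = x1" using H_x[OF px1] x1(2) inv_mv2[OF pH sH, of x1] by (simp add: Hi_def)
  show "let x1 = grad_cert q g d blk p (coordv q 1) in
            \<forall>c>0. c \<ge> (1 + r) / r * dnorm q g blk p x1 t \<longrightarrow>
              t + c *\<^sub>R coordv q 1 \<in> interior SC \<and>
              x1 \<in> certs q g d blk p (t + c *\<^sub>R coordv q 1) \<and>
              lnorm q g blk p ((1/c) *\<^sub>R x1)
                 ((1/c) *\<^sub>R x1 - grad_cert q g d blk p (t + c *\<^sub>R coordv q 1)) \<le> r"
    unfolding Let_def e1_def[symmetric] x1_def[symmetric] lnorm_eq dnorm_eq
  proof (intro allI impI conjI)
    fix c :: real assume c0: "0 < c" and cb: "(1 + r) / r * dnrm x1 t \<le> c"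
    define v where "v = Hi *v t"
    have Hv: "H x1 *v v = t" by (simp add: v_def Hi_def inv_mv[OF pH sH])
    have dn0: "0 \<le> dnrm x1 t" using pd_inv(5)[OF pH sH] by (simp add: dnrm_def psd_def qf_def)
    have dnc: "dnrm x1 t \<le> c * (r / (1 + r))"
      using cb r_pos by (simp add: field_simps)
    also have "\<dots> < c" using c0 r_pos by (simp add: field_simps)
    finally have dlt: "dnrm x1 t < c" .
    have lv: "lnrm x1 v = dnrm x1 t"
      by (simp add: lnrm_def dnrm_def Hv) (simp add: v_def Hi_def inner_commute)
    have pdc: "pd (L (c *\<^sub>R x1 + v))" by (rule dikin_cert[OF px1 c0]) (simp add: lv dlt)
    have hia: "hess_inv_app q g blk p x1 (t + c *\<^sub>R e1) = c *\<^sub>R x1 + v"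
      by (simp add: hess_inv_app_def Hi_def[symmetric] matrix_vector_right_distrib
          matrix_vector_mult_scaleR Hie v_def add.commute)
    show "x1 \<in> certs q g d blk p (t + c *\<^sub>R e1)"
      using x1(1) pdc by (simp add: certs_def hia psd_SD pd_psd)
    have "t + c *\<^sub>R e1 = H x1 *v (c *\<^sub>R x1 + v)"
      by (simp add: matrix_vector_right_distrib matrix_vector_mult_scaleR H_x[OF px1] x1(2) Hv add.commute)
    also have "\<dots> = Ls (matrix_inv (L x1) ** L (c *\<^sub>R x1 + v) ** matrix_inv (L x1))"
      by (simp add: H_mv hessf_def)
    finally have tce: "t + c *\<^sub>R e1 = Ls (matrix_inv (L x1) ** L (c *\<^sub>R x1 + v) ** matrix_inv (L x1))" .
    show tint: "t + c *\<^sub>R e1 \<in> interior SC"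
      unfolding tce by (intro Ls_pd_int pd_sandwich pdc pd_inv[OF px1 L_symm])
    define y where "y = grad_cert q g d blk p (t + c *\<^sub>R e1)"
    have y: "y \<in> interior SD" "Gm y = t + c *\<^sub>R e1"
      using grad_cert_prop[OF pdx tint] by (auto simp: y_def)
    have py: "pd (L y)" by (rule int_SD_pd[OF y(1)])
    define x' where "x' = (1/c) *\<^sub>R x1"
    have c1: "1/c \<noteq> 0" using c0 by simp
    have px': "pd (L x')" using pd_scale[OF px1, of "1/c"] c0 by (simp add: x'_def L_scale)
    have Gx': "Gm x' = c *\<^sub>R e1" using Gm_scale[OF px1 c1] x1(2) by (simp add: x'_def)
    have Hx': "H x' = c^2 *\<^sub>R H x1" using H_scale[OF px1 c1] by (simp add: x'_def)
    have "dnrm x' t = sqrt (t \<bullet> ((1/c^2) *\<^sub>R (matrix_inv (H x1) *v t)))"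
    proof -
      have "matrix_inv (H x') = (1/c^2) *\<^sub>R matrix_inv (H x1)"
        unfolding Hx' by (rule inv_scale[OF pH sH]) (use c0 in simp)
      then show ?thesis by (simp add: dnrm_def)
    qed
    also have "\<dots> = dnrm x1 t / c" using c0 by (simp add: dnrm_def real_sqrt_mult real_sqrt_divide)
    also have "\<dots> \<le> r / (1 + r)" using dnc c0 by (simp add: field_simps)
    finally have dnx': "dnrm x' (Gm y - Gm x') \<le> r / (1 + r)" by (simp add: y(2) Gx')
    show "lnrm ((1/c) *\<^sub>R x1) ((1/c) *\<^sub>R x1 - y) \<le> r"
      using newton_bound[OF px' py r_pos dnx'] by (simp add: x'_def)
  qed
qed

end

theorem lemma3:
  fixes g :: "'i::finite \<Rightarrow> 'v::finite mpoly" and d :: "'i \<Rightarrow> nat"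
    and q :: "'u::finite \<Rightarrow> 'v mpoly"
    and blk :: "'k::finite \<Rightarrow> 'i" and p :: "'k \<Rightarrow> 'v mpoly"
    and x :: "real^'u" and r :: real
  assumes g_nz: "\<forall>i. g i \<noteq> 0"
    and q_basis: "is_basis_of q UNIV (Vspace g d)"
    and p_basis: "\<forall>i. is_basis_of p {k. blk k = i} {h. deg_le (d i) h}"
    and proper: "proper_cone (SigmaC q g d)"
    and one_int: "coordv q 1 \<in> interior (SigmaC q g d)"
    and x_int: "x \<in> interior (SigmaD q g d)"
    and one_P: "coordv q 1 \<in> interior (Pset q g d blk p x)"
    and r_pos: "0 < r" and r_le: "r \<le> 1/2"
  shows "\<forall>t. (\<exists>C. \<forall>c\<ge>C. x \<in> certs q g d blk p (t + c *\<^sub>R coordv q 1)) \<and>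
           (let x1 = grad_cert q g d blk p (coordv q 1) in
            \<forall>c>0. c \<ge> (1 + r) / r * dnorm q g blk p x1 t \<longrightarrow>
              t + c *\<^sub>R coordv q 1 \<in> interior (SigmaC q g d) \<and>
              x1 \<in> certs q g d blk p (t + c *\<^sub>R coordv q 1) \<and>
              lnorm q g blk p ((1/c) *\<^sub>R x1)
                 ((1/c) *\<^sub>R x1 - grad_cert q g d blk p (t + c *\<^sub>R coordv q 1)) \<le> r)"
proof -
  interpret wsos g d q blk p by (rule wsos.intro[OF g_nz q_basis p_basis proper])
  show ?thesis by (rule main[OF one_int x_int one_P r_pos])
qed

end
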